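(* $\widetilde{\mathbb{R}}_{sm}$ is an $f$-ring: it is an $l$-ring (with the order $\le$, $\vee=\max$, $\wedge=\min$) and for all $r,s,t\in\widetilde{\mathbb{R}}_{sm}$ with $t\ge0$ one has $(r\wedge s)t=rt\wedge st$.
   Context: Let $I=(0,1]$. $\widetilde{\mathbb{R}}_{sm}=\mathcal{E}_{M,sm}/\mathcal{N}_{sm}$ where $\mathcal{E}_{M,sm}$ is the set of smooth $(r_\varepsilon)_{\varepsilon\in I}\in\mathbb{R}^I$ with $|r_\varepsilon|=O(\varepsilon^{-N})$ for some $N$, and $\mathcal{N}_{sm}$ those smooth nets with $|r_\varepsilon|=O(\varepsilon^m)$ for all $m$. Similarly $\widetilde{\mathbb{R}}_{co}$ is defined with continuous nets; the natural map $\tau_{sm}:\widetilde{\mathbb{R}}_{sm}\to\widetilde{\mathbb{R}}_{co}$ is a ring isomorphism. $r\le s$ means there are representatives with $r_\varepsilon\le s_\varepsilon$ for all $\varepsilon$. $r\wedge s=\min(r,s)=\tau_{sm}^{-1}([(\min(r_\varepsilon,s_\varepsilon))_\varepsilon])$ and $r\vee s=\max(r,s)=\tau_{sm}^{-1}([(\max(r_\varepsilon,s_\varepsilon))_\varepsilon])$. *)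

theory Defs
  imports "HOL-Analysis.Analysis" "HOL-Library.Landau_Symbols" "HOL-Algebra.Ring"
begin

text \<open>Nets are functions real \<Rightarrow> real; only their values on the index set I = (0,1] matter.\<close>

definition I_set :: "real set" where
  "I_set = {0<..1}"

definition smooth_net :: "(real \<Rightarrow> real) \<Rightarrow> bool" where
  "smooth_net r \<longleftrightarrow> (\<exists>D :: nat \<Rightarrow> real \<Rightarrow> real.
      (\<forall>t\<in>I_set. D 0 t = r t) \<and>
      (\<forall>k. \<forall>t\<in>I_set. (D k has_real_derivative D (Suc k) t) (at t within I_set)))"

definition moderate_net :: "(real \<Rightarrow> real) \<Rightarrow> bool" where
  "moderate_net r \<longleftrightarrow> (\<exists>N::nat. r \<in> O[at_right 0](\<lambda>e. inverse (e ^ N)))"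

definition negligible_net :: "(real \<Rightarrow> real) \<Rightarrow> bool" where
  "negligible_net r \<longleftrightarrow> (\<forall>m::nat. r \<in> O[at_right 0](\<lambda>e. e ^ m))"

definition E_sm :: "(real \<Rightarrow> real) set" where
  "E_sm = {r. smooth_net r \<and> moderate_net r}"

definition N_sm :: "(real \<Rightarrow> real) set" where
  "N_sm = {r. smooth_net r \<and> negligible_net r}"

definition E_co :: "(real \<Rightarrow> real) set" where
  "E_co = {r. continuous_on I_set r \<and> moderate_net r}"

definition N_co :: "(real \<Rightarrow> real) set" where
  "N_co = {r. continuous_on I_set r \<and> negligible_net r}"

definition rel_sm :: "((real \<Rightarrow> real) \<times> (real \<Rightarrow> real)) set" where
  "rel_sm = {(r, s). r \<in> E_sm \<and> s \<in> E_sm \<and> (\<lambda>e. r e - s e) \<in> N_sm}"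

definition rel_co :: "((real \<Rightarrow> real) \<times> (real \<Rightarrow> real)) set" where
  "rel_co = {(r, s). r \<in> E_co \<and> s \<in> E_co \<and> (\<lambda>e. r e - s e) \<in> N_co}"

definition Rsm :: "(real \<Rightarrow> real) set set" where
  "Rsm = E_sm // rel_sm"

definition Rco :: "(real \<Rightarrow> real) set set" where
  "Rco = E_co // rel_co"

definition cls_sm :: "(real \<Rightarrow> real) \<Rightarrow> (real \<Rightarrow> real) set" where
  "cls_sm r = rel_sm `` {r}"

definition cls_co :: "(real \<Rightarrow> real) \<Rightarrow> (real \<Rightarrow> real) set" where
  "cls_co r = rel_co `` {r}"

definition add_sm :: "(real \<Rightarrow> real) set \<Rightarrow> (real \<Rightarrow> real) set \<Rightarrow> (real \<Rightarrow> real) set" where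
  "add_sm X Y = (\<Union>r\<in>X. \<Union>s\<in>Y. cls_sm (\<lambda>e. r e + s e))"

definition mult_sm :: "(real \<Rightarrow> real) set \<Rightarrow> (real \<Rightarrow> real) set \<Rightarrow> (real \<Rightarrow> real) set" where
  "mult_sm X Y = (\<Union>r\<in>X. \<Union>s\<in>Y. cls_sm (\<lambda>e. r e * s e))"

definition Rsm_ring :: "(real \<Rightarrow> real) set ring" where
  "Rsm_ring = \<lparr>carrier = Rsm, mult = mult_sm, one = cls_sm (\<lambda>e. 1),
               zero = cls_sm (\<lambda>e. 0), add = add_sm\<rparr>"

text \<open>The natural map tau_sm : Rsm \<rightarrow> Rco, [r]_sm \<mapsto> [r]_co.\<close>
definition tau_sm :: "(real \<Rightarrow> real) set \<Rightarrow> (real \<Rightarrow> real) set" where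
  "tau_sm X = rel_co `` X"

definition le_sm :: "(real \<Rightarrow> real) set \<Rightarrow> (real \<Rightarrow> real) set \<Rightarrow> bool" where
  "le_sm X Y \<longleftrightarrow> (\<exists>r\<in>X. \<exists>s\<in>Y. \<forall>e\<in>I_set. r e \<le> s e)"

text \<open>min / max: tau_sm^{-1} of the class of the pointwise min / max of representatives.\<close>
definition min_sm :: "(real \<Rightarrow> real) set \<Rightarrow> (real \<Rightarrow> real) set \<Rightarrow> (real \<Rightarrow> real) set" where
  "min_sm X Y = (THE Z. Z \<in> Rsm \<and>
      (\<exists>r\<in>X. \<exists>s\<in>Y. tau_sm Z = cls_co (\<lambda>e. min (r e) (s e))))"

definition max_sm :: "(real \<Rightarrow> real) set \<Rightarrow> (real \<Rightarrow> real) set \<Rightarrow> (real \<Rightarrow> real) set" where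
  "max_sm X Y = (THE Z. Z \<in> Rsm \<and>
      (\<exists>r\<in>X. \<exists>s\<in>Y. tau_sm Z = cls_co (\<lambda>e. max (r e) (s e))))"

definition l_ring :: "'a ring \<Rightarrow> ('a \<Rightarrow> 'a \<Rightarrow> bool) \<Rightarrow> ('a \<Rightarrow> 'a \<Rightarrow> 'a) \<Rightarrow> ('a \<Rightarrow> 'a \<Rightarrow> 'a) \<Rightarrow> bool" where
  "l_ring R lq mn mx \<longleftrightarrow>
     ring R \<and>
     (\<forall>x\<in>carrier R. lq x x) \<and>
     (\<forall>x\<in>carrier R. \<forall>y\<in>carrier R. lq x y \<and> lq y x \<longrightarrow> x = y) \<and>
     (\<forall>x\<in>carrier R. \<forall>y\<in>carrier R. \<forall>z\<in>carrier R. lq x y \<and> lq y z \<longrightarrow> lq x z) \<and>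
     (\<forall>x\<in>carrier R. \<forall>y\<in>carrier R. \<forall>z\<in>carrier R. lq x y \<longrightarrow> lq (x \<oplus>\<^bsub>R\<^esub> z) (y \<oplus>\<^bsub>R\<^esub> z)) \<and>
     (\<forall>x\<in>carrier R. \<forall>y\<in>carrier R. lq \<zero>\<^bsub>R\<^esub> x \<and> lq \<zero>\<^bsub>R\<^esub> y \<longrightarrow> lq \<zero>\<^bsub>R\<^esub> (x \<otimes>\<^bsub>R\<^esub> y)) \<and>
     (\<forall>x\<in>carrier R. \<forall>y\<in>carrier R.
        mn x y \<in> carrier R \<and> lq (mn x y) x \<and> lq (mn x y) y \<and>
        (\<forall>z\<in>carrier R. lq z x \<and> lq z y \<longrightarrow> lq z (mn x y))) \<and>
     (\<forall>x\<in>carrier R. \<forall>y\<in>carrier R.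
        mx x y \<in> carrier R \<and> lq x (mx x y) \<and> lq y (mx x y) \<and>
        (\<forall>z\<in>carrier R. lq x z \<and> lq y z \<longrightarrow> lq (mx x y) z))"

definition f_ring :: "'a ring \<Rightarrow> ('a \<Rightarrow> 'a \<Rightarrow> bool) \<Rightarrow> ('a \<Rightarrow> 'a \<Rightarrow> 'a) \<Rightarrow> ('a \<Rightarrow> 'a \<Rightarrow> 'a) \<Rightarrow> bool" where
  "f_ring R lq mn mx \<longleftrightarrow> l_ring R lq mn mx \<and>
     (\<forall>r\<in>carrier R. \<forall>s\<in>carrier R. \<forall>t\<in>carrier R. lq \<zero>\<^bsub>R\<^esub> t \<longrightarrow>
        mn r s \<otimes>\<^bsub>R\<^esub> t = mn (r \<otimes>\<^bsub>R\<^esub> t) (s \<otimes>\<^bsub>R\<^esub> t))"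

end

theory Submission
  imports Defs
begin


lemma I_pos: "t \<in> I_set \<Longrightarrow> 0 < t" by (simp add: I_set_def)

lemma smooth_coind:
  assumes "P f"
    and step: "\<And>g. P g \<Longrightarrow> \<exists>g'. P g' \<and> (\<forall>t\<in>I_set. (g has_real_derivative g' t) (at t within I_set))"
  shows "smooth_net f"
proof -
  define nxt where "nxt g = (SOME g'. P g' \<and> (\<forall>t\<in>I_set. (g has_real_derivative g' t) (at t within I_set)))" for g
  define D where "D k = (nxt ^^ k) f" for k
  have PD: "P (D k)" for k
  proof (induction k)
    case 0 then show ?case using assms(1) by (simp add: D_def)
  next
    case (Suc k)
    have "P (nxt (D k))" using someI_ex[OF step[OF Suc]] unfolding nxt_def by blast
    then show ?case by (simp add: D_def)
  qed
  have "\<forall>t\<in>I_set. (D k has_real_derivative D (Suc k) t) (at t within I_set)" for k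
  proof -
    have "P (nxt (D k)) \<and> (\<forall>t\<in>I_set. (D k has_real_derivative nxt (D k) t) (at t within I_set))"
      using someI_ex[OF step[OF PD[of k]]] unfolding nxt_def .
    then show ?thesis by (simp add: D_def)
  qed
  then show ?thesis unfolding smooth_net_def by (intro exI[of _ D]) (auto simp: D_def)
qed

lemma smooth_deriv:
  assumes "smooth_net f"
  shows "\<exists>g. smooth_net g \<and> (\<forall>t\<in>I_set. (f has_real_derivative g t) (at t within I_set))"
proof -
  obtain D :: "nat \<Rightarrow> real \<Rightarrow> real" where D0: "\<forall>t\<in>I_set. D 0 t = f t"
    and DS: "\<forall>k. \<forall>t\<in>I_set. (D k has_real_derivative D (Suc k) t) (at t within I_set)"
    using assms unfolding smooth_net_def by blast
  have "smooth_net (D 1)" unfolding smooth_net_def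
    by (intro exI[of _ "\<lambda>k. D (Suc k)"]) (use DS in auto)
  moreover have "(f has_real_derivative D 1 t) (at t within I_set)" if "t \<in> I_set" for t
  proof -
    have "(D 0 has_real_derivative D 1 t) (at t within I_set)" using DS that by simp
    from has_field_derivative_transform_within[OF this zero_less_one that]
    show ?thesis using D0 that by auto
  qed
  ultimately show ?thesis by blast
qed

lemma smooth_const: "smooth_net (\<lambda>_. c)"
  by (rule smooth_coind[where P="\<lambda>g. \<exists>c. g = (\<lambda>_. c)"]) (auto intro!: exI[of _ "\<lambda>_. 0"])

definition EE :: "real \<Rightarrow> real" where "EE e = exp (- inverse e)"

definition sa :: "(real \<Rightarrow> real) \<Rightarrow> real \<Rightarrow> real" where
  "sa f e = sqrt ((f e)^2 + (EE e)^2)"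

inductive_set Alg :: "(real \<Rightarrow> real) set" where
  sm: "smooth_net f \<Longrightarrow> f \<in> Alg"
| q: "(\<lambda>e. inverse e) \<in> Alg"
| E: "EE \<in> Alg"
| pl: "f \<in> Alg \<Longrightarrow> g \<in> Alg \<Longrightarrow> (\<lambda>e. f e + g e) \<in> Alg"
| tm: "f \<in> Alg \<Longrightarrow> g \<in> Alg \<Longrightarrow> (\<lambda>e. f e * g e) \<in> Alg"
| S: "f \<in> Alg \<Longrightarrow> sa f \<in> Alg"
| IS: "f \<in> Alg \<Longrightarrow> (\<lambda>e. inverse (sa f e)) \<in> Alg"

lemma sa_pos: "0 < sa f e"
  unfolding sa_def EE_def by (intro real_sqrt_gt_zero add_nonneg_pos) auto

lemma dEE: "t \<in> I_set \<Longrightarrow> (EE has_real_derivative (inverse t * inverse t) * EE t) (at t within I_set)"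
proof -
  assume "t \<in> I_set"
  then have t: "t \<noteq> 0" using I_pos by force
  have "((\<lambda>e. exp (- inverse e)) has_real_derivative exp (- inverse t) * (- (- (inverse t ^ Suc (Suc 0)))))
     (at t within I_set)"
  proof (rule DERIV_chain2[where f=exp])
    show "DERIV exp (- inverse t) :> exp (- inverse t)" by (rule DERIV_exp)
    show "((\<lambda>x. - inverse x) has_real_derivative - (- (inverse t ^ Suc (Suc 0)))) (at t within I_set)"
      by (rule DERIV_minus[OF DERIV_inverse[OF t]])
  qed
  then show ?thesis unfolding EE_def[abs_def] by (simp add: power2_eq_square mult_ac)
qed

lemma dinv: "t \<in> I_set \<Longrightarrow> ((\<lambda>e. inverse e) has_real_derivative - 1 * (inverse t * inverse t)) (at t within I_set)"
proof -
  assume "t \<in> I_set"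
  then have t: "t \<noteq> 0" using I_pos by force
  show ?thesis using DERIV_inverse[OF t, of I_set] by (simp add: power2_eq_square)
qed

lemma dsa:
  assumes "t \<in> I_set" "(f has_real_derivative f' t) (at t within I_set)"
  shows "(sa f has_real_derivative (f t * f' t + EE t * ((inverse t * inverse t) * EE t)) * inverse (sa f t)) (at t within I_set)"
proof -
  have pos: "0 < (f t)^2 + (EE t)^2" using sa_pos[of f t] unfolding sa_def by simp
  have in_d: "((\<lambda>e. (f e)^2 + (EE e)^2) has_real_derivative 2 * f t * f' t + 2 * EE t * ((inverse t * inverse t) * EE t))
     (at t within I_set)"
    using DERIV_add[OF DERIV_power[OF assms(2), of 2] DERIV_power[OF dEE[OF assms(1)], of 2]]
    by (simp add: mult_ac)
  have d: "((\<lambda>e. sqrt ((f e)^2 + (EE e)^2)) has_real_derivative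
       inverse (sqrt ((f t)^2 + (EE t)^2)) / 2 * (2 * f t * f' t + 2 * EE t * ((inverse t * inverse t) * EE t)))
       (at t within I_set)"
    by (rule DERIV_chain2[OF DERIV_real_sqrt[OF pos] in_d])
  have eq: "inverse (sqrt ((f t)^2 + (EE t)^2)) / 2 * (2 * f t * f' t + 2 * EE t * ((inverse t * inverse t) * EE t))
     = (f t * f' t + EE t * ((inverse t * inverse t) * EE t)) * inverse (sqrt ((f t)^2 + (EE t)^2))"
    by (cases "sqrt ((f t)^2 + (EE t)^2) = 0") (simp_all add: field_simps)
  show ?thesis unfolding sa_def[abs_def] using d by (simp only: eq)
qed

lemma Alg_deriv:
  assumes "f \<in> Alg"
  shows "\<exists>g\<in>Alg. \<forall>t\<in>I_set. (f has_real_derivative g t) (at t within I_set)"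
  using assms
proof (induction rule: Alg.induct)
  case (sm f)
  then obtain g where "smooth_net g" "\<forall>t\<in>I_set. (f has_real_derivative g t) (at t within I_set)"
    using smooth_deriv[OF sm] by blast
  then show ?case using Alg.sm by blast
next
  case q
  show ?case
  proof (rule bexI[of _ "\<lambda>e. - 1 * (inverse e * inverse e)"])
    show "\<forall>t\<in>I_set. ((\<lambda>e. inverse e) has_real_derivative (\<lambda>e. - 1 * (inverse e * inverse e)) t) (at t within I_set)"
      using dinv by simp
    show "(\<lambda>e. - 1 * (inverse e * inverse e)) \<in> Alg"
      by (rule Alg.tm, rule Alg.sm, rule smooth_const, rule Alg.tm, rule Alg.q, rule Alg.q)
  qed
next
  case E
  show ?case
  proof (rule bexI[of _ "\<lambda>e. (inverse e * inverse e) * EE e"])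
    show "\<forall>t\<in>I_set. (EE has_real_derivative (\<lambda>e. (inverse e * inverse e) * EE e) t) (at t within I_set)"
      using dEE by simp
    show "(\<lambda>e. (inverse e * inverse e) * EE e) \<in> Alg"
      by (rule Alg.tm, rule Alg.tm, rule Alg.q, rule Alg.q, rule Alg.E)
  qed
next
  case (pl f g)
  obtain f' where f': "f' \<in> Alg" "\<forall>t\<in>I_set. (f has_real_derivative f' t) (at t within I_set)"
    using pl.IH(1) by blast
  obtain g' where g': "g' \<in> Alg" "\<forall>t\<in>I_set. (g has_real_derivative g' t) (at t within I_set)"
    using pl.IH(2) by blast
  show ?case
  proof (rule bexI[of _ "\<lambda>e. f' e + g' e"])
    show "\<forall>t\<in>I_set. ((\<lambda>e. f e + g e) has_real_derivative (\<lambda>e. f' e + g' e) t) (at t within I_set)"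
      using f'(2) g'(2) by (simp add: DERIV_add)
    show "(\<lambda>e. f' e + g' e) \<in> Alg" by (rule Alg.pl[OF f'(1) g'(1)])
  qed
next
  case (tm f g)
  obtain f' where f': "f' \<in> Alg" "\<forall>t\<in>I_set. (f has_real_derivative f' t) (at t within I_set)"
    using tm.IH(1) by blast
  obtain g' where g': "g' \<in> Alg" "\<forall>t\<in>I_set. (g has_real_derivative g' t) (at t within I_set)"
    using tm.IH(2) by blast
  show ?case
  proof (rule bexI[of _ "\<lambda>e. f' e * g e + g' e * f e"])
    show "\<forall>t\<in>I_set. ((\<lambda>e. f e * g e) has_real_derivative (\<lambda>e. f' e * g e + g' e * f e) t) (at t within I_set)"
      using f'(2) g'(2) DERIV_mult by blast
    show "(\<lambda>e. f' e * g e + g' e * f e) \<in> Alg"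
      by (rule Alg.pl, rule Alg.tm[OF f'(1) tm.hyps(2)], rule Alg.tm[OF g'(1) tm.hyps(1)])
  qed
next
  case (S f)
  obtain f' where f': "f' \<in> Alg" "\<forall>t\<in>I_set. (f has_real_derivative f' t) (at t within I_set)"
    using S.IH by blast
  show ?case
  proof (rule bexI[of _ "\<lambda>e. (f e * f' e + EE e * ((inverse e * inverse e) * EE e)) * inverse (sa f e)"])
    show "\<forall>t\<in>I_set. (sa f has_real_derivative (\<lambda>e. (f e * f' e + EE e * ((inverse e * inverse e) * EE e)) * inverse (sa f e)) t) (at t within I_set)"
    proof
      fix t assume t: "t \<in> I_set"
      show "(sa f has_real_derivative (\<lambda>e. (f e * f' e + EE e * ((inverse e * inverse e) * EE e)) * inverse (sa f e)) t) (at t within I_set)"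
        using dsa[of t f f', OF t f'(2)[rule_format, OF t]] by simp
    qed
    show "(\<lambda>e. (f e * f' e + EE e * ((inverse e * inverse e) * EE e)) * inverse (sa f e)) \<in> Alg"
      by (rule Alg.tm, rule Alg.pl, rule Alg.tm[OF S.hyps f'(1)], rule Alg.tm, rule Alg.E,
          rule Alg.tm, rule Alg.tm, rule Alg.q, rule Alg.q, rule Alg.E, rule Alg.IS[OF S.hyps])
  qed
next
  case (IS f)
  obtain f' where f': "f' \<in> Alg" "\<forall>t\<in>I_set. (f has_real_derivative f' t) (at t within I_set)"
    using IS.IH by blast
  define h where "h = (\<lambda>e. - 1 * ((f e * f' e + EE e * ((inverse e * inverse e) * EE e)) *
     (inverse (sa f e) * (inverse (sa f e) * inverse (sa f e)))))"
  show ?case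
  proof (rule bexI[of _ h])
    show "\<forall>t\<in>I_set. ((\<lambda>e. inverse (sa f e)) has_real_derivative h t) (at t within I_set)"
    proof
      fix t assume t: "t \<in> I_set"
      have ne: "sa f t \<noteq> 0" using sa_pos[of f t] by simp
      show "((\<lambda>e. inverse (sa f e)) has_real_derivative h t) (at t within I_set)"
      proof (rule DERIV_cong[OF DERIV_inverse_fun[OF dsa[of t f f', OF t f'(2)[rule_format, OF t]] ne]])
        have "\<And>A S. S \<noteq> 0 \<Longrightarrow> - (A * inverse (S::real) * inverse (S ^ Suc (Suc 0))) = - 1 * (A * (inverse S * (inverse S * inverse S)))"
          by (simp add: field_simps power2_eq_square)
        from this[OF ne] show "- ((f t * f' t + EE t * (inverse t * inverse t * EE t)) * inverse (sa f t) * inverse (sa f t ^ Suc (Suc 0))) = h t"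
          unfolding h_def by simp
      qed
    qed
    show "h \<in> Alg" unfolding h_def
      by (rule Alg.tm, rule Alg.sm, rule smooth_const, rule Alg.tm, rule Alg.pl, rule Alg.tm[OF IS.hyps f'(1)], rule Alg.tm, rule Alg.E,
          rule Alg.tm, rule Alg.tm, rule Alg.q, rule Alg.q, rule Alg.E,
          rule Alg.tm, rule Alg.IS[OF IS.hyps], rule Alg.tm, rule Alg.IS[OF IS.hyps], rule Alg.IS[OF IS.hyps])
  qed
qed

lemma Alg_smooth: "f \<in> Alg \<Longrightarrow> smooth_net f"
proof (rule smooth_coind[where P="\<lambda>g. g \<in> Alg"])
  fix g assume "g \<in> Alg"
  from Alg_deriv[OF this] obtain g' where "g' \<in> Alg"
    "\<forall>t\<in>I_set. (g has_real_derivative g' t) (at t within I_set)" by blast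
  then show "\<exists>g'. g' \<in> Alg \<and> (\<forall>t\<in>I_set. (g has_real_derivative g' t) (at t within I_set))" by blast
qed

lemma smooth_add: "smooth_net f \<Longrightarrow> smooth_net g \<Longrightarrow> smooth_net (\<lambda>e. f e + g e)"
  by (rule Alg_smooth, rule Alg.pl) (auto intro: Alg.sm)
lemma smooth_mult: "smooth_net f \<Longrightarrow> smooth_net g \<Longrightarrow> smooth_net (\<lambda>e. f e * g e)"
  by (rule Alg_smooth, rule Alg.tm) (auto intro: Alg.sm)
lemma smooth_sa: "smooth_net f \<Longrightarrow> smooth_net (sa f)"
  by (rule Alg_smooth, rule Alg.S) (auto intro: Alg.sm)
lemma smooth_cmult: "smooth_net f \<Longrightarrow> smooth_net (\<lambda>e. c * f e)"
  using smooth_mult[OF smooth_const] .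
lemma smooth_minus: "smooth_net f \<Longrightarrow> smooth_net (\<lambda>e. - f e)"
  using smooth_cmult[of f "-1"] by simp
lemma smooth_diff: "smooth_net f \<Longrightarrow> smooth_net g \<Longrightarrow> smooth_net (\<lambda>e. f e - g e)"
  using smooth_add[OF _ smooth_minus, of f g] by simp

lemma smooth_cont: "smooth_net f \<Longrightarrow> continuous_on I_set f"
proof -
  assume "smooth_net f"
  then obtain g where g: "\<forall>t\<in>I_set. (f has_real_derivative g t) (at t within I_set)"
    using smooth_deriv by blast
  show ?thesis unfolding continuous_on_eq_continuous_within
    using g DERIV_continuous by blast
qed



definition MOD :: "(real \<Rightarrow> real) \<Rightarrow> bool" where
  "MOD r \<longleftrightarrow> (\<exists>N c. \<forall>\<^sub>F e in at_right 0. \<bar>r e\<bar> \<le> c * inverse (e ^ N))"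
definition NEG :: "(real \<Rightarrow> real) \<Rightarrow> bool" where
  "NEG r \<longleftrightarrow> (\<forall>m. \<exists>c. \<forall>\<^sub>F e in at_right 0. \<bar>r e\<bar> \<le> c * e ^ m)"

lemma ev01: "\<forall>\<^sub>F e in at_right (0::real). 0 < e \<and> e < 1"
  unfolding eventually_at_right_field by (intro exI[of _ 1]) auto

lemma evI: "\<forall>\<^sub>F e in at_right (0::real). e \<in> I_set"
  using ev01 by eventually_elim (auto simp: I_set_def)

lemma moderate_iff: "moderate_net r \<longleftrightarrow> MOD r"
proof
  assume "moderate_net r"
  then obtain N c where c: "c > 0" "\<forall>\<^sub>F e in at_right 0. norm (r e) \<le> c * norm (inverse ((e::real) ^ N))"
    unfolding moderate_net_def bigo_def by blast
  have "\<forall>\<^sub>F e in at_right 0. \<bar>r e\<bar> \<le> c * inverse (e ^ N)"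
    using c(2) ev01 by eventually_elim auto
  then show "MOD r" unfolding MOD_def by blast
next
  assume "MOD r"
  then obtain N c where c: "\<forall>\<^sub>F e in at_right 0. \<bar>r e\<bar> \<le> c * inverse ((e::real) ^ N)"
    unfolding MOD_def by blast
  have "\<forall>\<^sub>F e in at_right 0. norm (r e) \<le> max c 1 * norm (inverse ((e::real) ^ N))"
    using c ev01
  proof eventually_elim
    case (elim e)
    have "c * inverse (e ^ N) \<le> max c 1 * inverse (e ^ N)"
      using elim by (intro mult_right_mono) auto
    then have "\<bar>r e\<bar> \<le> max c 1 * inverse (e ^ N)" using elim(1) by linarith
    then show ?case using elim by auto
  qed
  then show "moderate_net r" unfolding moderate_net_def bigo_def
    by (intro exI[of _ N]) (auto intro!: exI[of _ "max c 1"])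
qed

lemma negligible_iff: "negligible_net r \<longleftrightarrow> NEG r"
proof
  assume a: "negligible_net r"
  show "NEG r" unfolding NEG_def
  proof
    fix m
    obtain c where c: "c > 0" "\<forall>\<^sub>F e in at_right 0. norm (r e) \<le> c * norm ((e::real) ^ m)"
      using a unfolding negligible_net_def bigo_def by blast
    have "\<forall>\<^sub>F e in at_right 0. \<bar>r e\<bar> \<le> c * e ^ m"
      using c(2) ev01 by eventually_elim (auto simp: abs_mult)
    then show "\<exists>c. \<forall>\<^sub>F e in at_right 0. \<bar>r e\<bar> \<le> c * e ^ m" by blast
  qed
next
  assume a: "NEG r"
  show "negligible_net r" unfolding negligible_net_def bigo_def
  proof (intro allI CollectI)
    fix m
    obtain c where c: "\<forall>\<^sub>F e in at_right 0. \<bar>r e\<bar> \<le> c * (e::real) ^ m"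
      using a unfolding NEG_def by blast
    have "\<forall>\<^sub>F e in at_right 0. norm (r e) \<le> max c 1 * norm ((e::real) ^ m)"
      using c ev01
    proof eventually_elim
      case (elim e)
      have "c * e ^ m \<le> max c 1 * e ^ m"
        using elim by (intro mult_right_mono) auto
      then have "\<bar>r e\<bar> \<le> max c 1 * e ^ m" using elim(1) by linarith
      then show ?case using elim by (auto simp: abs_mult)
    qed
    then show "\<exists>c>0. \<forall>\<^sub>F e in at_right 0. norm (r e) \<le> c * norm (e ^ m)"
      by (intro exI[of _ "max c 1"]) auto
  qed
qed

lemma neg_bound:
  assumes "NEG a" "\<forall>\<^sub>F e in at_right 0. \<bar>d e\<bar> \<le> \<bar>a e\<bar>"
  shows "NEG d"
  unfolding NEG_def
proof
  fix m
  obtain c where c: "\<forall>\<^sub>F e in at_right 0. \<bar>a e\<bar> \<le> c * (e::real) ^ m"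
    using assms(1) unfolding NEG_def by blast
  have "\<forall>\<^sub>F e in at_right 0. \<bar>d e\<bar> \<le> c * e ^ m"
    using c assms(2) by eventually_elim auto
  then show "\<exists>c. \<forall>\<^sub>F e in at_right 0. \<bar>d e\<bar> \<le> c * e ^ m" by blast
qed

lemma neg_boundI:
  assumes "NEG a" "\<forall>e\<in>I_set. \<bar>d e\<bar> \<le> \<bar>a e\<bar>"
  shows "NEG d"
  by (rule neg_bound[OF assms(1)]) (use evI in \<open>rule eventually_mono\<close>, use assms(2) in auto)

lemma mod_bound:
  assumes "MOD a" "\<forall>\<^sub>F e in at_right 0. \<bar>d e\<bar> \<le> \<bar>a e\<bar>"
  shows "MOD d"
proof -
  obtain N c where c: "\<forall>\<^sub>F e in at_right 0. \<bar>a e\<bar> \<le> c * inverse ((e::real) ^ N)"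
    using assms(1) unfolding MOD_def by blast
  have "\<forall>\<^sub>F e in at_right 0. \<bar>d e\<bar> \<le> c * inverse (e ^ N)"
    using c assms(2) by eventually_elim auto
  then show ?thesis unfolding MOD_def by blast
qed

lemma mod_boundI:
  assumes "MOD a" "\<forall>e\<in>I_set. \<bar>d e\<bar> \<le> \<bar>a e\<bar>"
  shows "MOD d"
  by (rule mod_bound[OF assms(1)]) (use evI in \<open>rule eventually_mono\<close>, use assms(2) in auto)

lemma inv_pow_le:
  assumes "0 < (e::real)" "e \<le> 1" "N \<le> M"
  shows "inverse (e ^ N) \<le> inverse (e ^ M)"
proof -
  have "e ^ M \<le> e ^ N" using assms by (intro power_decreasing) auto
  then show ?thesis using assms by (intro le_imp_inverse_le) auto
qed

lemma mod_const: "MOD (\<lambda>_. c)"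
  unfolding MOD_def by (intro exI[of _ 0] exI[of _ "\<bar>c\<bar>"]) auto

lemma neg_zero: "NEG (\<lambda>_. 0)"
  unfolding NEG_def by (auto intro!: exI[of _ 0])

lemma neg_mod: "NEG r \<Longrightarrow> MOD r"
proof -
  assume "NEG r"
  then obtain c where "\<forall>\<^sub>F e in at_right 0. \<bar>r e\<bar> \<le> c * (e::real) ^ 0"
    unfolding NEG_def by blast
  then have "\<forall>\<^sub>F e in at_right 0. \<bar>r e\<bar> \<le> c * inverse ((e::real) ^ 0)" by simp
  then show "MOD r" unfolding MOD_def by blast
qed

lemma mod_add:
  assumes "MOD r" "MOD s"
  shows "MOD (\<lambda>e. r e + s e)"
proof -
  obtain N1 c1 where c1: "\<forall>\<^sub>F e in at_right 0. \<bar>r e\<bar> \<le> c1 * inverse ((e::real) ^ N1)"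
    using assms(1) unfolding MOD_def by blast
  obtain N2 c2 where c2: "\<forall>\<^sub>F e in at_right 0. \<bar>s e\<bar> \<le> c2 * inverse ((e::real) ^ N2)"
    using assms(2) unfolding MOD_def by blast
  have "\<forall>\<^sub>F e in at_right 0. \<bar>r e + s e\<bar> \<le> (\<bar>c1\<bar> + \<bar>c2\<bar>) * inverse (e ^ (N1 + N2))"
    using c1 c2 ev01
  proof eventually_elim
    case (elim e)
    have i1: "inverse (e ^ N1) \<le> inverse (e ^ (N1 + N2))" using elim by (intro inv_pow_le) auto
    have i2: "inverse (e ^ N2) \<le> inverse (e ^ (N1 + N2))" using elim by (intro inv_pow_le) auto
    have p: "0 \<le> inverse (e ^ N1)" "0 \<le> inverse (e ^ N2)" using elim by auto
    have A: "c1 * inverse (e ^ N1) \<le> \<bar>c1\<bar> * inverse (e ^ (N1 + N2))"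
      by (rule mult_mono[OF abs_ge_self i1 abs_ge_zero p(1)])
    have B: "c2 * inverse (e ^ N2) \<le> \<bar>c2\<bar> * inverse (e ^ (N1 + N2))"
      by (rule mult_mono[OF abs_ge_self i2 abs_ge_zero p(2)])
    have "\<bar>r e + s e\<bar> \<le> \<bar>r e\<bar> + \<bar>s e\<bar>" by (rule abs_triangle_ineq)
    then show ?case using elim A B unfolding distrib_right by linarith
  qed
  then show ?thesis unfolding MOD_def by blast
qed

lemma mod_mult:
  assumes "MOD r" "MOD s"
  shows "MOD (\<lambda>e. r e * s e)"
proof -
  obtain N1 c1 where c1: "\<forall>\<^sub>F e in at_right 0. \<bar>r e\<bar> \<le> c1 * inverse ((e::real) ^ N1)"
    using assms(1) unfolding MOD_def by blast
  obtain N2 c2 where c2: "\<forall>\<^sub>F e in at_right 0. \<bar>s e\<bar> \<le> c2 * inverse ((e::real) ^ N2)"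
    using assms(2) unfolding MOD_def by blast
  have "\<forall>\<^sub>F e in at_right 0. \<bar>r e * s e\<bar> \<le> (c1 * c2) * inverse (e ^ (N1 + N2))"
    using c1 c2 ev01
  proof eventually_elim
    case (elim e)
    have "\<bar>r e * s e\<bar> \<le> (c1 * inverse (e ^ N1)) * (c2 * inverse (e ^ N2))"
      unfolding abs_mult using elim by (intro mult_mono) auto
    also have "\<dots> = (c1 * c2) * inverse (e ^ (N1 + N2))"
      by (simp add: power_add mult_ac)
    finally show ?case .
  qed
  then show ?thesis unfolding MOD_def by blast
qed

lemma neg_add:
  assumes "NEG r" "NEG s"
  shows "NEG (\<lambda>e. r e + s e)"
  unfolding NEG_def
proof
  fix m
  obtain c1 where c1: "\<forall>\<^sub>F e in at_right 0. \<bar>r e\<bar> \<le> c1 * (e::real) ^ m"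
    using assms(1) unfolding NEG_def by blast
  obtain c2 where c2: "\<forall>\<^sub>F e in at_right 0. \<bar>s e\<bar> \<le> c2 * (e::real) ^ m"
    using assms(2) unfolding NEG_def by blast
  have "\<forall>\<^sub>F e in at_right 0. \<bar>r e + s e\<bar> \<le> (c1 + c2) * e ^ m"
    using c1 c2
  proof eventually_elim
    case (elim e)
    have "\<bar>r e + s e\<bar> \<le> \<bar>r e\<bar> + \<bar>s e\<bar>" by (rule abs_triangle_ineq)
    then show ?case using elim unfolding distrib_right by linarith
  qed
  then show "\<exists>c. \<forall>\<^sub>F e in at_right 0. \<bar>r e + s e\<bar> \<le> c * e ^ m" by blast
qed

lemma neg_mult_mod:
  assumes "NEG r" "MOD s"
  shows "NEG (\<lambda>e. r e * s e)"
  unfolding NEG_def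
proof
  fix m
  obtain N c2 where c2: "\<forall>\<^sub>F e in at_right 0. \<bar>s e\<bar> \<le> c2 * inverse ((e::real) ^ N)"
    using assms(2) unfolding MOD_def by blast
  obtain c1 where c1: "\<forall>\<^sub>F e in at_right 0. \<bar>r e\<bar> \<le> c1 * (e::real) ^ (m + N)"
    using assms(1) unfolding NEG_def by blast
  have "\<forall>\<^sub>F e in at_right 0. \<bar>r e * s e\<bar> \<le> (c1 * c2) * e ^ m"
    using c1 c2 ev01
  proof eventually_elim
    case (elim e)
    have "\<bar>r e * s e\<bar> \<le> (c1 * e ^ (m + N)) * (c2 * inverse (e ^ N))"
      unfolding abs_mult using elim by (intro mult_mono) auto
    also have "\<dots> = (c1 * c2) * e ^ m"
      using elim by (simp add: power_add mult_ac)
    finally show ?case .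
  qed
  then show "\<exists>c. \<forall>\<^sub>F e in at_right 0. \<bar>r e * s e\<bar> \<le> c * e ^ m" by blast
qed

lemma neg_mult_mod': "MOD s \<Longrightarrow> NEG r \<Longrightarrow> NEG (\<lambda>e. s e * r e)"
  using neg_mult_mod[of r s] by (simp add: mult.commute)

lemma neg_cmult: "NEG r \<Longrightarrow> NEG (\<lambda>e. c * r e)"
  using neg_mult_mod'[OF mod_const] .
lemma mod_cmult: "MOD r \<Longrightarrow> MOD (\<lambda>e. c * r e)"
  using mod_mult[OF mod_const] .
lemma neg_minus: "NEG r \<Longrightarrow> NEG (\<lambda>e. - r e)"
  using neg_cmult[of r "-1"] by simp
lemma mod_minus: "MOD r \<Longrightarrow> MOD (\<lambda>e. - r e)"
  using mod_cmult[of r "-1"] by simp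
lemma neg_diff: "NEG r \<Longrightarrow> NEG s \<Longrightarrow> NEG (\<lambda>e. r e - s e)"
  using neg_add[OF _ neg_minus, of r s] by simp
lemma mod_diff: "MOD r \<Longrightarrow> MOD s \<Longrightarrow> MOD (\<lambda>e. r e - s e)"
  using mod_add[OF _ mod_minus, of r s] by simp

lemma EE_pos: "0 < EE e" unfolding EE_def by simp

lemma EE_bound:
  assumes "0 < e" "e \<le> 1"
  shows "EE e \<le> real (Suc m) ^ Suc m * e ^ m"
proof -
  define n where "n = Suc m"
  have ie: "0 < inverse e" using assms by simp
  have "- real n \<le> inverse e" using ie of_nat_0_le_iff[of n] by linarith
  then have "(1 + inverse e / real n) ^ n \<le> exp (inverse e)"
    by (intro exp_ge_one_plus_x_over_n_power_n) (auto simp: n_def)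
  moreover have "(inverse e / real n) ^ n \<le> (1 + inverse e / real n) ^ n"
    using assms by (intro power_mono) (auto simp: n_def)
  ultimately have A: "(inverse e / real n) ^ n \<le> exp (inverse e)" by linarith
  have pos: "0 < (inverse e / real n) ^ n" using assms by (simp add: n_def)
  have "EE e = inverse (exp (inverse e))" by (simp add: EE_def exp_minus)
  also have "\<dots> \<le> inverse ((inverse e / real n) ^ n)"
    using A pos by (intro le_imp_inverse_le) auto
  also have "\<dots> = real n ^ n * e ^ n" by (simp add: field_simps power_divide)
  also have "\<dots> \<le> real n ^ n * e ^ m"
    using assms by (intro mult_left_mono power_decreasing) (auto simp: n_def)
  finally show ?thesis by (simp add: n_def)
qed

lemma neg_EE: "NEG EE"
  unfolding NEG_def
proof
  fix m
  have "\<forall>\<^sub>F e in at_right 0. \<bar>EE e\<bar> \<le> real (Suc m) ^ Suc m * e ^ m"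
    using ev01 by eventually_elim (use EE_bound EE_pos in \<open>auto simp: abs_of_pos\<close>)
  then show "\<exists>c. \<forall>\<^sub>F e in at_right 0. \<bar>EE e\<bar> \<le> c * e ^ m" by blast
qed



lemma E_sm_iff: "r \<in> E_sm \<longleftrightarrow> smooth_net r \<and> MOD r"
  by (simp add: E_sm_def moderate_iff)
lemma N_sm_iff: "r \<in> N_sm \<longleftrightarrow> smooth_net r \<and> NEG r"
  by (simp add: N_sm_def negligible_iff)
lemma E_co_iff: "r \<in> E_co \<longleftrightarrow> continuous_on I_set r \<and> MOD r"
  by (simp add: E_co_def moderate_iff)
lemma N_co_iff: "r \<in> N_co \<longleftrightarrow> continuous_on I_set r \<and> NEG r"
  by (simp add: N_co_def negligible_iff)

lemma rel_sm_iff: "(r, s) \<in> rel_sm \<longleftrightarrow> r \<in> E_sm \<and> s \<in> E_sm \<and> (\<lambda>e. r e - s e) \<in> N_sm"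
  by (simp add: rel_sm_def)
lemma rel_co_iff: "(r, s) \<in> rel_co \<longleftrightarrow> r \<in> E_co \<and> s \<in> E_co \<and> (\<lambda>e. r e - s e) \<in> N_co"
  by (simp add: rel_co_def)

lemma E_add: "r \<in> E_sm \<Longrightarrow> s \<in> E_sm \<Longrightarrow> (\<lambda>e. r e + s e) \<in> E_sm"
  by (simp add: E_sm_iff smooth_add mod_add)
lemma E_mult: "r \<in> E_sm \<Longrightarrow> s \<in> E_sm \<Longrightarrow> (\<lambda>e. r e * s e) \<in> E_sm"
  by (simp add: E_sm_iff smooth_mult mod_mult)
lemma E_minus: "r \<in> E_sm \<Longrightarrow> (\<lambda>e. - r e) \<in> E_sm"
  by (simp add: E_sm_iff smooth_minus mod_minus)
lemma E_diff: "r \<in> E_sm \<Longrightarrow> s \<in> E_sm \<Longrightarrow> (\<lambda>e. r e - s e) \<in> E_sm"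
  by (simp add: E_sm_iff smooth_diff mod_diff)
lemma E_const: "(\<lambda>e. c) \<in> E_sm"
  by (simp add: E_sm_iff smooth_const mod_const)
lemma N_E: "r \<in> N_sm \<Longrightarrow> r \<in> E_sm"
  by (simp add: E_sm_iff N_sm_iff neg_mod)
lemma N_add: "r \<in> N_sm \<Longrightarrow> s \<in> N_sm \<Longrightarrow> (\<lambda>e. r e + s e) \<in> N_sm"
  by (simp add: N_sm_iff smooth_add neg_add)
lemma N_diff: "r \<in> N_sm \<Longrightarrow> s \<in> N_sm \<Longrightarrow> (\<lambda>e. r e - s e) \<in> N_sm"
  by (simp add: N_sm_iff smooth_diff neg_diff)
lemma N_minus: "r \<in> N_sm \<Longrightarrow> (\<lambda>e. - r e) \<in> N_sm"
  by (simp add: N_sm_iff smooth_minus neg_minus)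
lemma N_mult: "r \<in> N_sm \<Longrightarrow> s \<in> E_sm \<Longrightarrow> (\<lambda>e. r e * s e) \<in> N_sm"
  by (simp add: N_sm_iff E_sm_iff smooth_mult neg_mult_mod)
lemma N_mult': "s \<in> E_sm \<Longrightarrow> r \<in> N_sm \<Longrightarrow> (\<lambda>e. s e * r e) \<in> N_sm"
  by (simp add: N_sm_iff E_sm_iff smooth_mult neg_mult_mod')
lemma N_zero: "(\<lambda>e. 0) \<in> N_sm"
  by (simp add: N_sm_iff smooth_const neg_zero)
lemma N_cong: "r \<in> N_sm \<Longrightarrow> (\<And>e. s e = r e) \<Longrightarrow> s \<in> N_sm"
proof -
  assume "r \<in> N_sm" "\<And>e. s e = r e"
  moreover have "s = r" using \<open>\<And>e. s e = r e\<close> by auto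
  ultimately show ?thesis by simp
qed
lemma E_cong: "r \<in> E_sm \<Longrightarrow> (\<And>e. s e = r e) \<Longrightarrow> s \<in> E_sm"
proof -
  assume "r \<in> E_sm" "\<And>e. s e = r e"
  moreover have "s = r" using \<open>\<And>e. s e = r e\<close> by auto
  ultimately show ?thesis by simp
qed

lemma equiv_sm: "equiv E_sm rel_sm"
proof (rule equivI)
  show "refl_on E_sm rel_sm" unfolding refl_on_def
    by (auto simp: rel_sm_iff intro: N_zero)
  show "sym rel_sm" unfolding sym_def
  proof (intro allI impI)
    fix x y assume "(x, y) \<in> rel_sm"
    then show "(y, x) \<in> rel_sm" unfolding rel_sm_iff
      by (auto intro: N_cong[OF N_minus])
  qed
  show "rel_sm \<subseteq> E_sm \<times> E_sm" by (auto simp: rel_sm_def)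
  show "trans rel_sm" unfolding trans_def
  proof (intro allI impI)
    fix x y z assume a: "(x, y) \<in> rel_sm" "(y, z) \<in> rel_sm"
    then have "(\<lambda>e. (x e - y e) + (y e - z e)) \<in> N_sm" unfolding rel_sm_iff
      using N_add[of "\<lambda>e. x e - y e" "\<lambda>e. y e - z e"] by auto
    then have xz: "(\<lambda>e. x e - z e) \<in> N_sm" by (rule N_cong) simp
    from a have "x \<in> E_sm" "z \<in> E_sm" unfolding rel_sm_iff by auto
    with xz show "(x, z) \<in> rel_sm" unfolding rel_sm_iff by blast
  qed
qed

lemma cls_eq: "r \<in> E_sm \<Longrightarrow> s \<in> E_sm \<Longrightarrow> cls_sm r = cls_sm s \<longleftrightarrow> (\<lambda>e. r e - s e) \<in> N_sm"
  unfolding cls_sm_def using eq_equiv_class_iff[OF equiv_sm] rel_sm_iff by blast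

lemma mem_cls: "s \<in> cls_sm r \<longleftrightarrow> (r, s) \<in> rel_sm"
  by (simp add: cls_sm_def)

lemma self_cls: "r \<in> E_sm \<Longrightarrow> r \<in> cls_sm r"
  using equiv_sm unfolding mem_cls equiv_def refl_on_def by blast

lemma Rsm_iff: "X \<in> Rsm \<longleftrightarrow> (\<exists>r\<in>E_sm. X = cls_sm r)"
  unfolding Rsm_def quotient_def cls_sm_def by blast

lemma cls_in: "r \<in> E_sm \<Longrightarrow> cls_sm r \<in> Rsm"
  using Rsm_iff by blast

lemma cls_cong: "(\<And>e. r e = s e) \<Longrightarrow> cls_sm r = cls_sm s"
proof -
  assume "\<And>e. r e = s e" then have "r = s" by auto
  then show ?thesis by simp
qed

lemma add_cls:
  assumes r: "r \<in> E_sm" and s: "s \<in> E_sm"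
  shows "add_sm (cls_sm r) (cls_sm s) = cls_sm (\<lambda>e. r e + s e)"
proof -
  have eq: "cls_sm (\<lambda>e. r' e + s' e) = cls_sm (\<lambda>e. r e + s e)"
    if "r' \<in> cls_sm r" "s' \<in> cls_sm s" for r' s'
  proof -
    from that have r': "r' \<in> E_sm" "(\<lambda>e. r e - r' e) \<in> N_sm"
      and s': "s' \<in> E_sm" "(\<lambda>e. s e - s' e) \<in> N_sm"
      unfolding mem_cls rel_sm_iff by auto
    have "(\<lambda>e. (r' e + s' e) - (r e + s e)) \<in> N_sm"
      by (rule N_cong[OF N_minus[OF N_add[OF r'(2) s'(2)]]]) simp
    then show ?thesis using r' s' r s by (subst cls_eq) (auto intro: E_add)
  qed
  show ?thesis unfolding add_sm_def
    using eq self_cls[OF r] self_cls[OF s] by blast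
qed

lemma mult_cls:
  assumes r: "r \<in> E_sm" and s: "s \<in> E_sm"
  shows "mult_sm (cls_sm r) (cls_sm s) = cls_sm (\<lambda>e. r e * s e)"
proof -
  have eq: "cls_sm (\<lambda>e. r' e * s' e) = cls_sm (\<lambda>e. r e * s e)"
    if "r' \<in> cls_sm r" "s' \<in> cls_sm s" for r' s'
  proof -
    from that have r': "r' \<in> E_sm" "(\<lambda>e. r e - r' e) \<in> N_sm"
      and s': "s' \<in> E_sm" "(\<lambda>e. s e - s' e) \<in> N_sm"
      unfolding mem_cls rel_sm_iff by auto
    have "(\<lambda>e. (r e - r' e) * s' e + r e * (s e - s' e)) \<in> N_sm"
      by (intro N_add N_mult N_mult' r'(2) s'(2) s'(1) r)
    then have "(\<lambda>e. (r' e * s' e) - (r e * s e)) \<in> N_sm"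
      by (rule N_minus[THEN N_cong]) (simp add: algebra_simps)
    then show ?thesis using r' s' r s by (subst cls_eq) (auto intro: E_mult)
  qed
  show ?thesis unfolding mult_sm_def
    using eq self_cls[OF r] self_cls[OF s] by blast
qed

lemma carrier_R: "carrier Rsm_ring = Rsm" and add_R: "add Rsm_ring = add_sm"
  and mult_R: "mult Rsm_ring = mult_sm" and zero_R: "zero Rsm_ring = cls_sm (\<lambda>e. 0)"
  and one_R: "one Rsm_ring = cls_sm (\<lambda>e. 1)"
  by (simp_all add: Rsm_ring_def)

lemma RsmE: assumes "X \<in> Rsm" obtains r where "r \<in> E_sm" "X = cls_sm r"
  using assms Rsm_iff by blast

lemma ring_R: "ring Rsm_ring"
proof (rule ringI)
  show "abelian_group Rsm_ring"
  proof (rule abelian_groupI, unfold carrier_R add_R zero_R)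
    fix x y assume "x \<in> Rsm" "y \<in> Rsm"
    then show "add_sm x y \<in> Rsm"
      by (elim RsmE) (simp add: add_cls E_add cls_in)
  next
    show "cls_sm (\<lambda>e. 0) \<in> Rsm" by (rule cls_in[OF E_const])
  next
    fix x y z assume "x \<in> Rsm" "y \<in> Rsm" "z \<in> Rsm"
    then show "add_sm (add_sm x y) z = add_sm x (add_sm y z)"
      by (elim RsmE) (simp add: add_cls E_add add.assoc)
  next
    fix x y assume "x \<in> Rsm" "y \<in> Rsm"
    then show "add_sm x y = add_sm y x"
      by (elim RsmE) (simp add: add_cls add.commute)
  next
    fix x assume "x \<in> Rsm"
    then show "add_sm (cls_sm (\<lambda>e. 0)) x = x"
      by (elim RsmE) (simp add: add_cls E_const)
  next
    fix x assume "x \<in> Rsm"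
    then obtain r where r: "r \<in> E_sm" "x = cls_sm r" by (elim RsmE)
    show "\<exists>y\<in>Rsm. add_sm y x = cls_sm (\<lambda>e. 0)"
      by (rule bexI[of _ "cls_sm (\<lambda>e. - r e)"]) (simp_all add: r add_cls E_minus cls_in)
  qed
next
  show "monoid Rsm_ring"
  proof (rule monoidI, unfold carrier_R mult_R one_R)
    fix x y assume "x \<in> Rsm" "y \<in> Rsm"
    then show "mult_sm x y \<in> Rsm"
      by (elim RsmE) (simp add: mult_cls E_mult cls_in)
  next
    show "cls_sm (\<lambda>e. 1) \<in> Rsm" by (rule cls_in[OF E_const])
  next
    fix x y z assume "x \<in> Rsm" "y \<in> Rsm" "z \<in> Rsm"
    then show "mult_sm (mult_sm x y) z = mult_sm x (mult_sm y z)"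
      by (elim RsmE) (simp add: mult_cls E_mult mult.assoc)
  next
    fix x assume "x \<in> Rsm"
    then show "mult_sm (cls_sm (\<lambda>e. 1)) x = x"
      by (elim RsmE) (simp add: mult_cls E_const)
  next
    fix x assume "x \<in> Rsm"
    then show "mult_sm x (cls_sm (\<lambda>e. 1)) = x"
      by (elim RsmE) (simp add: mult_cls E_const)
  qed
next
  fix x y z assume "x \<in> carrier Rsm_ring" "y \<in> carrier Rsm_ring" "z \<in> carrier Rsm_ring"
  then show "(x \<oplus>\<^bsub>Rsm_ring\<^esub> y) \<otimes>\<^bsub>Rsm_ring\<^esub> z = x \<otimes>\<^bsub>Rsm_ring\<^esub> z \<oplus>\<^bsub>Rsm_ring\<^esub> y \<otimes>\<^bsub>Rsm_ring\<^esub> z"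
    unfolding carrier_R add_R mult_R
    by (elim RsmE) (simp add: mult_cls add_cls E_mult E_add distrib_right)
next
  fix x y z assume "x \<in> carrier Rsm_ring" "y \<in> carrier Rsm_ring" "z \<in> carrier Rsm_ring"
  then show "z \<otimes>\<^bsub>Rsm_ring\<^esub> (x \<oplus>\<^bsub>Rsm_ring\<^esub> y) = z \<otimes>\<^bsub>Rsm_ring\<^esub> x \<oplus>\<^bsub>Rsm_ring\<^esub> z \<otimes>\<^bsub>Rsm_ring\<^esub> y"
    unfolding carrier_R add_R mult_R
    by (elim RsmE) (simp add: mult_cls add_cls E_mult E_add distrib_left)
qed



lemma le_cls:
  assumes r: "r \<in> E_sm" and s: "s \<in> E_sm"
  shows "le_sm (cls_sm r) (cls_sm s) \<longleftrightarrow> (\<exists>n\<in>N_sm. \<forall>e\<in>I_set. r e \<le> s e + n e)"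
proof
  assume "le_sm (cls_sm r) (cls_sm s)"
  then obtain r' s' where rs: "r' \<in> cls_sm r" "s' \<in> cls_sm s" "\<forall>e\<in>I_set. r' e \<le> s' e"
    unfolding le_sm_def by blast
  from rs have r': "(\<lambda>e. r e - r' e) \<in> N_sm" and s': "(\<lambda>e. s e - s' e) \<in> N_sm"
    unfolding mem_cls rel_sm_iff by auto
  have "(\<lambda>e. (r e - r' e) - (s e - s' e)) \<in> N_sm" by (rule N_diff[OF r' s'])
  moreover have "\<forall>e\<in>I_set. r e \<le> s e + ((r e - r' e) - (s e - s' e))" using rs(3) by auto
  ultimately show "\<exists>n\<in>N_sm. \<forall>e\<in>I_set. r e \<le> s e + n e"
    by (intro bexI[of _ "\<lambda>e. r e - r' e - (s e - s' e)"]) simp_all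
next
  assume "\<exists>n\<in>N_sm. \<forall>e\<in>I_set. r e \<le> s e + n e"
  then obtain n where n: "n \<in> N_sm" "\<forall>e\<in>I_set. r e \<le> s e + n e" by blast
  have "(s, \<lambda>e. s e + n e) \<in> rel_sm" unfolding rel_sm_iff
    using s E_add[OF s N_E[OF n(1)]] N_cong[OF N_minus[OF n(1)]] by auto
  then have "(\<lambda>e. s e + n e) \<in> cls_sm s" unfolding mem_cls .
  then show "le_sm (cls_sm r) (cls_sm s)" unfolding le_sm_def
    using self_cls[OF r] n(2) by (intro bexI[of _ r] bexI[of _ "\<lambda>e. s e + n e"]) simp_all
qed

lemma NEG_abs: "NEG a \<Longrightarrow> NEG (\<lambda>e. \<bar>a e\<bar>)"
  by (rule neg_bound) (auto intro: always_eventually)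
lemma MOD_abs: "MOD a \<Longrightarrow> MOD (\<lambda>e. \<bar>a e\<bar>)"
  by (rule mod_bound) (auto intro: always_eventually)

lemma E_co_sm: "r \<in> E_sm \<Longrightarrow> r \<in> E_co"
  by (simp add: E_sm_iff E_co_iff smooth_cont)
lemma N_co_sm: "r \<in> N_sm \<Longrightarrow> r \<in> N_co"
  by (simp add: N_sm_iff N_co_iff smooth_cont)

lemma N_co_cong: "r \<in> N_co \<Longrightarrow> (\<And>e. s e = r e) \<Longrightarrow> s \<in> N_co"
proof -
  assume "r \<in> N_co" "\<And>e. s e = r e"
  moreover have "s = r" using \<open>\<And>e. s e = r e\<close> by auto
  ultimately show ?thesis by simp
qed

lemma equiv_co: "equiv E_co rel_co"
proof (rule equivI)
  show "refl_on E_co rel_co" unfolding refl_on_def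
    by (auto simp: rel_co_iff N_co_iff neg_zero)
  show "sym rel_co" unfolding sym_def
  proof (intro allI impI)
    fix x y assume "(x, y) \<in> rel_co"
    then show "(y, x) \<in> rel_co" unfolding rel_co_iff E_co_iff N_co_iff
      using neg_minus[of "\<lambda>e. x e - y e"] continuous_on_minus[of I_set "\<lambda>e. x e - y e"]
      by (auto intro: continuous_on_diff)
  qed
  show "rel_co \<subseteq> E_co \<times> E_co" by (auto simp: rel_co_def)
  show "trans rel_co" unfolding trans_def
  proof (intro allI impI)
    fix x y z assume a: "(x, y) \<in> rel_co" "(y, z) \<in> rel_co"
    then have "NEG (\<lambda>e. (x e - y e) + (y e - z e))" unfolding rel_co_iff N_co_iff
      using neg_add[of "\<lambda>e. x e - y e" "\<lambda>e. y e - z e"] by auto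
    then have "NEG (\<lambda>e. x e - z e)" by simp
    moreover from a have "x \<in> E_co" "z \<in> E_co" unfolding rel_co_iff by auto
    ultimately show "(x, z) \<in> rel_co" unfolding rel_co_iff N_co_iff E_co_iff
      by (auto intro: continuous_on_diff)
  qed
qed

lemma cls_co_eq: "r \<in> E_co \<Longrightarrow> s \<in> E_co \<Longrightarrow> cls_co r = cls_co s \<longleftrightarrow> (\<lambda>e. r e - s e) \<in> N_co"
  unfolding cls_co_def using eq_equiv_class_iff[OF equiv_co] rel_co_iff by blast

lemma tau_cls:
  assumes r: "r \<in> E_sm"
  shows "tau_sm (cls_sm r) = cls_co r"
proof
  show "cls_co r \<subseteq> tau_sm (cls_sm r)"
    unfolding tau_sm_def cls_co_def using self_cls[OF r] by blast
  show "tau_sm (cls_sm r) \<subseteq> cls_co r"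
  proof
    fix y assume "y \<in> tau_sm (cls_sm r)"
    then obtain x where x: "x \<in> cls_sm r" "(x, y) \<in> rel_co" unfolding tau_sm_def by blast
    from x(1) have "(r, x) \<in> rel_co" unfolding mem_cls rel_sm_iff rel_co_iff
      by (auto intro: E_co_sm N_co_sm)
    with x(2) have "(r, y) \<in> rel_co" using equiv_co unfolding equiv_def trans_def by blast
    then show "y \<in> cls_co r" unfolding cls_co_def by simp
  qed
qed

lemma sa_ge: "\<bar>h e\<bar> \<le> sa h e"
proof -
  have "sqrt ((h e)^2) \<le> sa h e" unfolding sa_def by (rule real_sqrt_le_mono) simp
  then show ?thesis by simp
qed

lemma sa_le: "sa h e \<le> \<bar>h e\<bar> + EE e"
proof -
  have E: "0 < EE e" by (rule EE_pos)
  have "(h e)^2 + (EE e)^2 \<le> (\<bar>h e\<bar> + EE e)^2"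
    using E by (simp add: power2_eq_square algebra_simps)
  then have "sa h e \<le> sqrt ((\<bar>h e\<bar> + EE e)^2)" unfolding sa_def by (rule real_sqrt_le_mono)
  then show ?thesis using E by simp
qed

definition smin :: "(real \<Rightarrow> real) \<Rightarrow> (real \<Rightarrow> real) \<Rightarrow> real \<Rightarrow> real" where
  "smin r s = (\<lambda>e. inverse 2 * ((r e + s e) - sa (\<lambda>e. r e - s e) e))"
definition smax :: "(real \<Rightarrow> real) \<Rightarrow> (real \<Rightarrow> real) \<Rightarrow> real \<Rightarrow> real" where
  "smax r s = (\<lambda>e. inverse 2 * ((r e + s e) + sa (\<lambda>e. r e - s e) e))"

lemma minmax_aux:
  fixes a b S E :: real
  assumes "\<bar>a - b\<bar> \<le> S" "S \<le> \<bar>a - b\<bar> + E" "0 < E"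
  shows "inverse 2 * ((a + b) - S) \<le> a" "inverse 2 * ((a + b) - S) \<le> b"
    "\<bar>inverse 2 * ((a + b) - S) - min a b\<bar> \<le> E"
    "a \<le> inverse 2 * ((a + b) + S)" "b \<le> inverse 2 * ((a + b) + S)"
    "\<bar>inverse 2 * ((a + b) + S) - max a b\<bar> \<le> E"
  apply (insert assms)
  apply (auto simp: abs_if min_def max_def abs_le_iff split: if_splits)
  apply (simp_all add: field_simps)
  done

lemma smin_facts: "smin r s e \<le> r e" "smin r s e \<le> s e" "\<bar>smin r s e - min (r e) (s e)\<bar> \<le> EE e"
  and smax_facts: "r e \<le> smax r s e" "s e \<le> smax r s e" "\<bar>smax r s e - max (r e) (s e)\<bar> \<le> EE e"
  using minmax_aux[OF sa_ge[of "\<lambda>e. r e - s e" e] sa_le[of "\<lambda>e. r e - s e" e] EE_pos[of e]]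
  unfolding smin_def smax_def by simp_all

lemma smooth_smin: "smooth_net r \<Longrightarrow> smooth_net s \<Longrightarrow> smooth_net (smin r s)"
  unfolding smin_def
  by (intro smooth_cmult smooth_diff smooth_add smooth_sa) auto
lemma smooth_smax: "smooth_net r \<Longrightarrow> smooth_net s \<Longrightarrow> smooth_net (smax r s)"
  unfolding smax_def
  by (intro smooth_cmult smooth_add smooth_sa smooth_diff) auto

lemma MOD_bnd: "MOD r \<Longrightarrow> MOD s \<Longrightarrow> MOD (\<lambda>e. \<bar>r e\<bar> + \<bar>s e\<bar> + EE e)"
  by (rule mod_add[OF mod_add[OF MOD_abs MOD_abs] neg_mod[OF neg_EE]])

lemma E_smin: assumes "r \<in> E_sm" "s \<in> E_sm" shows "smin r s \<in> E_sm"
proof -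
  have "MOD (smin r s)"
  proof (rule mod_boundI)
    show "MOD (\<lambda>e. \<bar>r e\<bar> + \<bar>s e\<bar> + EE e)" using assms by (intro MOD_bnd) (auto simp: E_sm_iff)
    show "\<forall>e\<in>I_set. \<bar>smin r s e\<bar> \<le> \<bar>\<bar>r e\<bar> + \<bar>s e\<bar> + EE e\<bar>"
    proof
      fix e
      have "\<bar>smin r s e - min (r e) (s e)\<bar> \<le> EE e" "0 < EE e" by (rule smin_facts EE_pos)+
      then show "\<bar>smin r s e\<bar> \<le> \<bar>\<bar>r e\<bar> + \<bar>s e\<bar> + EE e\<bar>" by (auto simp: abs_if min_def split: if_splits)
    qed
  qed
  then show ?thesis using assms by (simp add: E_sm_iff smooth_smin)
qed

lemma E_smax: assumes "r \<in> E_sm" "s \<in> E_sm" shows "smax r s \<in> E_sm"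
proof -
  have "MOD (smax r s)"
  proof (rule mod_boundI)
    show "MOD (\<lambda>e. \<bar>r e\<bar> + \<bar>s e\<bar> + EE e)" using assms by (intro MOD_bnd) (auto simp: E_sm_iff)
    show "\<forall>e\<in>I_set. \<bar>smax r s e\<bar> \<le> \<bar>\<bar>r e\<bar> + \<bar>s e\<bar> + EE e\<bar>"
    proof
      fix e
      have "\<bar>smax r s e - max (r e) (s e)\<bar> \<le> EE e" "0 < EE e" by (rule smax_facts EE_pos)+
      then show "\<bar>smax r s e\<bar> \<le> \<bar>\<bar>r e\<bar> + \<bar>s e\<bar> + EE e\<bar>" by (auto simp: abs_if max_def split: if_splits)
    qed
  qed
  then show ?thesis using assms by (simp add: E_sm_iff smooth_smax)
qed



lemma min_co: assumes "r \<in> E_sm" "s \<in> E_sm" shows "(\<lambda>e. min (r e) (s e)) \<in> E_co"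
proof -
  have c: "continuous_on I_set r" "continuous_on I_set s" "MOD r" "MOD s"
    using assms by (auto simp: E_sm_iff smooth_cont)
  have "MOD (\<lambda>e. min (r e) (s e))"
  proof (rule mod_boundI[OF MOD_bnd[OF c(3,4)]], intro ballI)
    fix e
    have "\<bar>min (r e) (s e)\<bar> \<le> \<bar>r e\<bar> + \<bar>s e\<bar>" by (auto simp: min_def)
    moreover have "0 < EE e" by (rule EE_pos)
    ultimately show "\<bar>min (r e) (s e)\<bar> \<le> \<bar>\<bar>r e\<bar> + \<bar>s e\<bar> + EE e\<bar>" by linarith
  qed
  then show ?thesis using c by (auto simp: E_co_iff intro: continuous_on_min)
qed

lemma max_co: assumes "r \<in> E_sm" "s \<in> E_sm" shows "(\<lambda>e. max (r e) (s e)) \<in> E_co"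
proof -
  have c: "continuous_on I_set r" "continuous_on I_set s" "MOD r" "MOD s"
    using assms by (auto simp: E_sm_iff smooth_cont)
  have "MOD (\<lambda>e. max (r e) (s e))"
  proof (rule mod_boundI[OF MOD_bnd[OF c(3,4)]], intro ballI)
    fix e
    have "\<bar>max (r e) (s e)\<bar> \<le> \<bar>r e\<bar> + \<bar>s e\<bar>" by (auto simp: max_def)
    moreover have "0 < EE e" by (rule EE_pos)
    ultimately show "\<bar>max (r e) (s e)\<bar> \<le> \<bar>\<bar>r e\<bar> + \<bar>s e\<bar> + EE e\<bar>" by linarith
  qed
  then show ?thesis using c by (auto simp: E_co_iff intro: continuous_on_max)
qed

lemma min_diff_bound: "\<bar>min a b - min c d\<bar> \<le> \<bar>a - c\<bar> + \<bar>(b::real) - d\<bar>"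
  by (auto simp: min_def abs_if)
lemma max_diff_bound: "\<bar>max a b - max c d\<bar> \<le> \<bar>a - c\<bar> + \<bar>(b::real) - d\<bar>"
  by (auto simp: max_def abs_if)

lemma min_sm_cls:
  assumes r: "r \<in> E_sm" and s: "s \<in> E_sm"
  shows "min_sm (cls_sm r) (cls_sm s) = cls_sm (smin r s)"
  unfolding min_sm_def
proof (rule the_equality)
  have sm: "smin r s \<in> E_sm" by (rule E_smin[OF r s])
  have "(\<lambda>e. smin r s e - min (r e) (s e)) \<in> N_co"
    unfolding N_co_iff
  proof
    show "continuous_on I_set (\<lambda>e. smin r s e - min (r e) (s e))"
      using min_co[OF r s] sm by (intro continuous_on_diff) (auto simp: E_co_iff E_sm_iff smooth_cont)
    show "NEG (\<lambda>e. smin r s e - min (r e) (s e))"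
    proof (rule neg_boundI[OF neg_EE], intro ballI)
      fix e
      have "\<bar>smin r s e - min (r e) (s e)\<bar> \<le> EE e" by (rule smin_facts)
      moreover have "0 < EE e" by (rule EE_pos)
      ultimately show "\<bar>smin r s e - min (r e) (s e)\<bar> \<le> \<bar>EE e\<bar>" by linarith
    qed
  qed
  then have "tau_sm (cls_sm (smin r s)) = cls_co (\<lambda>e. min (r e) (s e))"
    unfolding tau_cls[OF sm] using cls_co_eq[OF E_co_sm[OF sm] min_co[OF r s]] by simp
  then show "cls_sm (smin r s) \<in> Rsm \<and> (\<exists>r'\<in>cls_sm r. \<exists>s'\<in>cls_sm s.
      tau_sm (cls_sm (smin r s)) = cls_co (\<lambda>e. min (r' e) (s' e)))"
    using cls_in[OF sm] self_cls[OF r] self_cls[OF s] by blast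
next
  fix Z assume "Z \<in> Rsm \<and> (\<exists>r'\<in>cls_sm r. \<exists>s'\<in>cls_sm s. tau_sm Z = cls_co (\<lambda>e. min (r' e) (s' e)))"
  then obtain r' s' where r': "r' \<in> cls_sm r" and s': "s' \<in> cls_sm s"
    and t: "tau_sm Z = cls_co (\<lambda>e. min (r' e) (s' e))" and ZR: "Z \<in> Rsm" by blast
  from ZR obtain z where z: "z \<in> E_sm" "Z = cls_sm z" by (rule RsmE)
  from r' have r'': "r' \<in> E_sm" "NEG (\<lambda>e. r e - r' e)"
    unfolding mem_cls rel_sm_iff N_sm_iff by blast+
  from s' have s'': "s' \<in> E_sm" "NEG (\<lambda>e. s e - s' e)"
    unfolding mem_cls rel_sm_iff N_sm_iff by blast+
  have sm: "smin r s \<in> E_sm" by (rule E_smin[OF r s])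
  have "(\<lambda>e. min (r' e) (s' e) - smin r s e) \<in> N_co"
    unfolding N_co_iff
  proof
    show "continuous_on I_set (\<lambda>e. min (r' e) (s' e) - smin r s e)"
      using min_co[OF r''(1) s''(1)] sm by (intro continuous_on_diff) (auto simp: E_co_iff E_sm_iff smooth_cont)
    have "NEG (\<lambda>e. \<bar>r e - r' e\<bar> + \<bar>s e - s' e\<bar> + EE e)"
      by (intro neg_add NEG_abs r''(2) s''(2) neg_EE)
    then show "NEG (\<lambda>e. min (r' e) (s' e) - smin r s e)"
    proof (rule neg_boundI, intro ballI)
      fix e
      have m: "\<bar>min (r' e) (s' e) - min (r e) (s e)\<bar> \<le> \<bar>r e - r' e\<bar> + \<bar>s e - s' e\<bar>"
        using min_diff_bound[of "r' e" "s' e" "r e" "s e"]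
        by (simp only: abs_minus_commute[of "r' e"] abs_minus_commute[of "s' e"])
      have sf: "\<bar>smin r s e - min (r e) (s e)\<bar> \<le> EE e" by (rule smin_facts)
      have p: "0 \<le> \<bar>r e - r' e\<bar> + \<bar>s e - s' e\<bar> + EE e"
        using EE_pos[of e] abs_ge_zero[of "r e - r' e"] abs_ge_zero[of "s e - s' e"] by linarith
      have "\<bar>min (r' e) (s' e) - smin r s e\<bar> \<le> \<bar>min (r' e) (s' e) - min (r e) (s e)\<bar> + \<bar>smin r s e - min (r e) (s e)\<bar>"
        using abs_triangle_ineq4[of "min (r' e) (s' e) - min (r e) (s e)" "smin r s e - min (r e) (s e)"] by simp
      also have "\<dots> \<le> (\<bar>r e - r' e\<bar> + \<bar>s e - s' e\<bar>) + EE e" by (rule add_mono[OF m sf])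
      also have "\<dots> = \<bar>\<bar>r e - r' e\<bar> + \<bar>s e - s' e\<bar> + EE e\<bar>" using p by simp
      finally show "\<bar>min (r' e) (s' e) - smin r s e\<bar> \<le> \<bar>\<bar>r e - r' e\<bar> + \<bar>s e - s' e\<bar> + EE e\<bar>" .
    qed
  qed
  then have e1: "cls_co (\<lambda>e. min (r' e) (s' e)) = cls_co (smin r s)"
    using cls_co_eq[OF min_co[OF r''(1) s''(1)] E_co_sm[OF sm]] by blast
  have "cls_co z = tau_sm Z" using tau_cls[OF z(1)] z(2) by blast
  then have "cls_co z = cls_co (smin r s)" using t e1 by blast
  then have "(\<lambda>e. z e - smin r s e) \<in> N_co" using cls_co_eq[OF E_co_sm[OF z(1)] E_co_sm[OF sm]] by blast
  then have "NEG (\<lambda>e. z e - smin r s e)" unfolding N_co_iff by blast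
  moreover have "smooth_net (\<lambda>e. z e - smin r s e)"
    using z(1) sm unfolding E_sm_iff by (intro smooth_diff) blast+
  ultimately have "(\<lambda>e. z e - smin r s e) \<in> N_sm" unfolding N_sm_iff by blast
  then have "cls_sm z = cls_sm (smin r s)" using cls_eq[OF z(1) sm] by blast
  then show "Z = cls_sm (smin r s)" using z(2) by blast
qed

lemma max_sm_cls:
  assumes r: "r \<in> E_sm" and s: "s \<in> E_sm"
  shows "max_sm (cls_sm r) (cls_sm s) = cls_sm (smax r s)"
  unfolding max_sm_def
proof (rule the_equality)
  have sm: "smax r s \<in> E_sm" by (rule E_smax[OF r s])
  have "(\<lambda>e. smax r s e - max (r e) (s e)) \<in> N_co"
    unfolding N_co_iff
  proof
    show "continuous_on I_set (\<lambda>e. smax r s e - max (r e) (s e))"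
      using max_co[OF r s] sm by (intro continuous_on_diff) (auto simp: E_co_iff E_sm_iff smooth_cont)
    show "NEG (\<lambda>e. smax r s e - max (r e) (s e))"
    proof (rule neg_boundI[OF neg_EE], intro ballI)
      fix e
      have "\<bar>smax r s e - max (r e) (s e)\<bar> \<le> EE e" by (rule smax_facts)
      moreover have "0 < EE e" by (rule EE_pos)
      ultimately show "\<bar>smax r s e - max (r e) (s e)\<bar> \<le> \<bar>EE e\<bar>" by linarith
    qed
  qed
  then have "tau_sm (cls_sm (smax r s)) = cls_co (\<lambda>e. max (r e) (s e))"
    unfolding tau_cls[OF sm] using cls_co_eq[OF E_co_sm[OF sm] max_co[OF r s]] by simp
  then show "cls_sm (smax r s) \<in> Rsm \<and> (\<exists>r'\<in>cls_sm r. \<exists>s'\<in>cls_sm s.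
      tau_sm (cls_sm (smax r s)) = cls_co (\<lambda>e. max (r' e) (s' e)))"
    using cls_in[OF sm] self_cls[OF r] self_cls[OF s] by blast
next
  fix Z assume "Z \<in> Rsm \<and> (\<exists>r'\<in>cls_sm r. \<exists>s'\<in>cls_sm s. tau_sm Z = cls_co (\<lambda>e. max (r' e) (s' e)))"
  then obtain r' s' where r': "r' \<in> cls_sm r" and s': "s' \<in> cls_sm s"
    and t: "tau_sm Z = cls_co (\<lambda>e. max (r' e) (s' e))" and ZR: "Z \<in> Rsm" by blast
  from ZR obtain z where z: "z \<in> E_sm" "Z = cls_sm z" by (rule RsmE)
  from r' have r'': "r' \<in> E_sm" "NEG (\<lambda>e. r e - r' e)"
    unfolding mem_cls rel_sm_iff N_sm_iff by blast+
  from s' have s'': "s' \<in> E_sm" "NEG (\<lambda>e. s e - s' e)"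
    unfolding mem_cls rel_sm_iff N_sm_iff by blast+
  have sm: "smax r s \<in> E_sm" by (rule E_smax[OF r s])
  have "(\<lambda>e. max (r' e) (s' e) - smax r s e) \<in> N_co"
    unfolding N_co_iff
  proof
    show "continuous_on I_set (\<lambda>e. max (r' e) (s' e) - smax r s e)"
      using max_co[OF r''(1) s''(1)] sm by (intro continuous_on_diff) (auto simp: E_co_iff E_sm_iff smooth_cont)
    have "NEG (\<lambda>e. \<bar>r e - r' e\<bar> + \<bar>s e - s' e\<bar> + EE e)"
      by (intro neg_add NEG_abs r''(2) s''(2) neg_EE)
    then show "NEG (\<lambda>e. max (r' e) (s' e) - smax r s e)"
    proof (rule neg_boundI, intro ballI)
      fix e
      have m: "\<bar>max (r' e) (s' e) - max (r e) (s e)\<bar> \<le> \<bar>r e - r' e\<bar> + \<bar>s e - s' e\<bar>"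
        using max_diff_bound[of "r' e" "s' e" "r e" "s e"]
        by (simp only: abs_minus_commute[of "r' e"] abs_minus_commute[of "s' e"])
      have sf: "\<bar>smax r s e - max (r e) (s e)\<bar> \<le> EE e" by (rule smax_facts)
      have p: "0 \<le> \<bar>r e - r' e\<bar> + \<bar>s e - s' e\<bar> + EE e"
        using EE_pos[of e] abs_ge_zero[of "r e - r' e"] abs_ge_zero[of "s e - s' e"] by linarith
      have "\<bar>max (r' e) (s' e) - smax r s e\<bar> \<le> \<bar>max (r' e) (s' e) - max (r e) (s e)\<bar> + \<bar>smax r s e - max (r e) (s e)\<bar>"
        using abs_triangle_ineq4[of "max (r' e) (s' e) - max (r e) (s e)" "smax r s e - max (r e) (s e)"] by simp
      also have "\<dots> \<le> (\<bar>r e - r' e\<bar> + \<bar>s e - s' e\<bar>) + EE e" by (rule add_mono[OF m sf])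
      also have "\<dots> = \<bar>\<bar>r e - r' e\<bar> + \<bar>s e - s' e\<bar> + EE e\<bar>" using p by simp
      finally show "\<bar>max (r' e) (s' e) - smax r s e\<bar> \<le> \<bar>\<bar>r e - r' e\<bar> + \<bar>s e - s' e\<bar> + EE e\<bar>" .
    qed
  qed
  then have e1: "cls_co (\<lambda>e. max (r' e) (s' e)) = cls_co (smax r s)"
    using cls_co_eq[OF max_co[OF r''(1) s''(1)] E_co_sm[OF sm]] by blast
  have "cls_co z = tau_sm Z" using tau_cls[OF z(1)] z(2) by blast
  then have "cls_co z = cls_co (smax r s)" using t e1 by blast
  then have "(\<lambda>e. z e - smax r s e) \<in> N_co" using cls_co_eq[OF E_co_sm[OF z(1)] E_co_sm[OF sm]] by blast
  then have "NEG (\<lambda>e. z e - smax r s e)" unfolding N_co_iff by blast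
  moreover have "smooth_net (\<lambda>e. z e - smax r s e)"
    using z(1) sm unfolding E_sm_iff by (intro smooth_diff) blast+
  ultimately have "(\<lambda>e. z e - smax r s e) \<in> N_sm" unfolding N_sm_iff by blast
  then have "cls_sm z = cls_sm (smax r s)" using cls_eq[OF z(1) sm] by blast
  then show "Z = cls_sm (smax r s)" using z(2) by blast
qed



lemma N_EE: "EE \<in> N_sm"
  unfolding N_sm_iff using Alg_smooth[OF Alg.E] neg_EE by blast

lemma N_sa: assumes "n \<in> N_sm" shows "sa n \<in> N_sm"
proof -
  have sm: "smooth_net (sa n)" using assms by (simp add: N_sm_iff smooth_sa)
  have "NEG (\<lambda>e. \<bar>n e\<bar> + EE e)" using assms unfolding N_sm_iff
    by (intro neg_add NEG_abs neg_EE) blast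
  then have "NEG (sa n)"
  proof (rule neg_boundI, intro ballI)
    fix e
    have "0 \<le> sa n e" using sa_pos[of n e] by simp
    moreover have "sa n e \<le> \<bar>n e\<bar> + EE e" by (rule sa_le)
    ultimately show "\<bar>sa n e\<bar> \<le> \<bar>\<bar>n e\<bar> + EE e\<bar>" by simp
  qed
  then show ?thesis using sm by (simp add: N_sm_iff)
qed

lemma le_clsI: "r \<in> E_sm \<Longrightarrow> s \<in> E_sm \<Longrightarrow> n \<in> N_sm \<Longrightarrow> \<forall>e\<in>I_set. r e \<le> s e + n e
  \<Longrightarrow> le_sm (cls_sm r) (cls_sm s)"
  using le_cls by blast

lemma le_refl_c: "r \<in> E_sm \<Longrightarrow> le_sm (cls_sm r) (cls_sm r)"
  by (subst le_cls) (auto intro!: bexI[of _ "\<lambda>e. 0"] N_zero)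

lemma le_antisym_c:
  assumes r: "r \<in> E_sm" and s: "s \<in> E_sm"
    and "le_sm (cls_sm r) (cls_sm s)" "le_sm (cls_sm s) (cls_sm r)"
  shows "cls_sm r = cls_sm s"
proof -
  obtain n1 where n1: "n1 \<in> N_sm" "\<forall>e\<in>I_set. r e \<le> s e + n1 e" using assms(3) le_cls[OF r s] by blast
  obtain n2 where n2: "n2 \<in> N_sm" "\<forall>e\<in>I_set. s e \<le> r e + n2 e" using assms(4) le_cls[OF s r] by blast
  have "NEG (\<lambda>e. \<bar>n1 e\<bar> + \<bar>n2 e\<bar>)" using n1(1) n2(1) unfolding N_sm_iff
    by (intro neg_add NEG_abs) blast+
  then have "NEG (\<lambda>e. r e - s e)"
  proof (rule neg_boundI, intro ballI)
    fix e assume "e \<in> I_set"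
    then have "r e \<le> s e + n1 e" "s e \<le> r e + n2 e" using n1 n2 by auto
    then show "\<bar>r e - s e\<bar> \<le> \<bar>\<bar>n1 e\<bar> + \<bar>n2 e\<bar>\<bar>" by (auto simp: abs_if)
  qed
  moreover have "smooth_net (\<lambda>e. r e - s e)" using r s by (simp add: E_sm_iff smooth_diff)
  ultimately show ?thesis using cls_eq[OF r s] by (simp add: N_sm_iff)
qed

lemma le_trans_c:
  assumes r: "r \<in> E_sm" and s: "s \<in> E_sm" and t: "t \<in> E_sm"
    and "le_sm (cls_sm r) (cls_sm s)" "le_sm (cls_sm s) (cls_sm t)"
  shows "le_sm (cls_sm r) (cls_sm t)"
proof -
  obtain n1 where n1: "n1 \<in> N_sm" "\<forall>e\<in>I_set. r e \<le> s e + n1 e" using assms(4) le_cls[OF r s] by blast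
  obtain n2 where n2: "n2 \<in> N_sm" "\<forall>e\<in>I_set. s e \<le> t e + n2 e" using assms(5) le_cls[OF s t] by blast
  have "(\<lambda>e. n1 e + n2 e) \<in> N_sm" by (rule N_add[OF n1(1) n2(1)])
  moreover have "\<forall>e\<in>I_set. r e \<le> t e + (n1 e + n2 e)" using n1(2) n2(2) by fastforce
  ultimately show ?thesis by (rule le_clsI[OF r t])
qed

lemma le_add_c:
  assumes r: "r \<in> E_sm" and s: "s \<in> E_sm" and t: "t \<in> E_sm"
    and "le_sm (cls_sm r) (cls_sm s)"
  shows "le_sm (cls_sm (\<lambda>e. r e + t e)) (cls_sm (\<lambda>e. s e + t e))"
proof -
  obtain n where n: "n \<in> N_sm" "\<forall>e\<in>I_set. r e \<le> s e + n e" using assms(4) le_cls[OF r s] by blast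
  have "\<forall>e\<in>I_set. r e + t e \<le> (s e + t e) + n e" using n(2) by auto
  then show ?thesis using le_cls[OF E_add[OF r t] E_add[OF s t]] n(1) by blast
qed

lemma le_mult_c:
  assumes r: "r \<in> E_sm" and s: "s \<in> E_sm"
    and "le_sm (cls_sm (\<lambda>e. 0)) (cls_sm r)" "le_sm (cls_sm (\<lambda>e. 0)) (cls_sm s)"
  shows "le_sm (cls_sm (\<lambda>e. 0)) (cls_sm (\<lambda>e. r e * s e))"
proof -
  obtain n1 where n1: "n1 \<in> N_sm" "\<forall>e\<in>I_set. 0 \<le> r e + n1 e" using assms(3) le_cls[OF E_const r] by auto
  obtain n2 where n2: "n2 \<in> N_sm" "\<forall>e\<in>I_set. 0 \<le> s e + n2 e" using assms(4) le_cls[OF E_const s] by auto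
  have "(\<lambda>e. (n1 e * s e + r e * n2 e) + n1 e * n2 e) \<in> N_sm"
    by (intro N_add N_mult N_mult' n1(1) n2(1) r s N_E)
  moreover have "\<forall>e\<in>I_set. 0 \<le> r e * s e + ((n1 e * s e + r e * n2 e) + n1 e * n2 e)"
  proof
    fix e assume "e \<in> I_set"
    then have "0 \<le> (r e + n1 e) * (s e + n2 e)" using n1 n2 by simp
    then show "0 \<le> r e * s e + ((n1 e * s e + r e * n2 e) + n1 e * n2 e)" by (simp add: algebra_simps)
  qed
  ultimately show ?thesis using le_cls[OF E_const E_mult[OF r s]] by auto
qed

lemma smin_le_c:
  assumes r: "r \<in> E_sm" and s: "s \<in> E_sm"
  shows "le_sm (cls_sm (smin r s)) (cls_sm r)" "le_sm (cls_sm (smin r s)) (cls_sm s)"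
  using le_cls[OF E_smin[OF r s] r] le_cls[OF E_smin[OF r s] s] N_zero smin_facts
  by (auto intro!: bexI[of _ "\<lambda>e. 0"])

lemma smax_ge_c:
  assumes r: "r \<in> E_sm" and s: "s \<in> E_sm"
  shows "le_sm (cls_sm r) (cls_sm (smax r s))" "le_sm (cls_sm s) (cls_sm (smax r s))"
  using le_cls[OF r E_smax[OF r s]] le_cls[OF s E_smax[OF r s]] N_zero smax_facts
  by (auto intro!: bexI[of _ "\<lambda>e. 0"])

lemma smin_glb_c:
  assumes r: "r \<in> E_sm" and s: "s \<in> E_sm" and z: "z \<in> E_sm"
    and "le_sm (cls_sm z) (cls_sm r)" "le_sm (cls_sm z) (cls_sm s)"
  shows "le_sm (cls_sm z) (cls_sm (smin r s))"
proof -
  obtain n1 where n1: "n1 \<in> N_sm" "\<forall>e\<in>I_set. z e \<le> r e + n1 e" using assms(4) le_cls[OF z r] by blast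
  obtain n2 where n2: "n2 \<in> N_sm" "\<forall>e\<in>I_set. z e \<le> s e + n2 e" using assms(5) le_cls[OF z s] by blast
  have "(\<lambda>e. (sa n1 e + sa n2 e) + EE e) \<in> N_sm"
    by (intro N_add N_sa n1(1) n2(1) N_EE)
  moreover have "\<forall>e\<in>I_set. z e \<le> smin r s e + ((sa n1 e + sa n2 e) + EE e)"
  proof
    fix e assume "e \<in> I_set"
    then have a: "z e \<le> r e + n1 e" "z e \<le> s e + n2 e" using n1 n2 by auto
    have b: "\<bar>n1 e\<bar> \<le> sa n1 e" "\<bar>n2 e\<bar> \<le> sa n2 e" by (rule sa_ge)+
    have c: "\<bar>smin r s e - min (r e) (s e)\<bar> \<le> EE e" by (rule smin_facts)
    have "z e \<le> min (r e) (s e) + (\<bar>n1 e\<bar> + \<bar>n2 e\<bar>)" using a by (auto simp: min_def abs_if)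
    then show "z e \<le> smin r s e + ((sa n1 e + sa n2 e) + EE e)" using b c by (simp add: abs_le_iff) linarith
  qed
  ultimately show ?thesis by (rule le_clsI[OF z E_smin[OF r s]])
qed

lemma smax_lub_c:
  assumes r: "r \<in> E_sm" and s: "s \<in> E_sm" and z: "z \<in> E_sm"
    and "le_sm (cls_sm r) (cls_sm z)" "le_sm (cls_sm s) (cls_sm z)"
  shows "le_sm (cls_sm (smax r s)) (cls_sm z)"
proof -
  obtain n1 where n1: "n1 \<in> N_sm" "\<forall>e\<in>I_set. r e \<le> z e + n1 e" using assms(4) le_cls[OF r z] by blast
  obtain n2 where n2: "n2 \<in> N_sm" "\<forall>e\<in>I_set. s e \<le> z e + n2 e" using assms(5) le_cls[OF s z] by blast
  have "(\<lambda>e. (sa n1 e + sa n2 e) + EE e) \<in> N_sm"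
    by (intro N_add N_sa n1(1) n2(1) N_EE)
  moreover have "\<forall>e\<in>I_set. smax r s e \<le> z e + ((sa n1 e + sa n2 e) + EE e)"
  proof
    fix e assume "e \<in> I_set"
    then have a: "r e \<le> z e + n1 e" "s e \<le> z e + n2 e" using n1 n2 by auto
    have b: "\<bar>n1 e\<bar> \<le> sa n1 e" "\<bar>n2 e\<bar> \<le> sa n2 e" by (rule sa_ge)+
    have c: "\<bar>smax r s e - max (r e) (s e)\<bar> \<le> EE e" by (rule smax_facts)
    have "max (r e) (s e) \<le> z e + (\<bar>n1 e\<bar> + \<bar>n2 e\<bar>)" using a by (auto simp: max_def abs_if)
    then show "smax r s e \<le> z e + ((sa n1 e + sa n2 e) + EE e)" using b c by (simp add: abs_le_iff) linarith
  qed
  ultimately show ?thesis by (rule le_clsI[OF E_smax[OF r s] z])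
qed

lemma fring_c:
  assumes r: "r \<in> E_sm" and s: "s \<in> E_sm" and t: "t \<in> E_sm" and tp: "\<forall>e\<in>I_set. 0 \<le> t e"
  shows "cls_sm (\<lambda>e. smin r s e * t e) = cls_sm (smin (\<lambda>e. r e * t e) (\<lambda>e. s e * t e))"
proof -
  have E1: "(\<lambda>e. smin r s e * t e) \<in> E_sm" by (rule E_mult[OF E_smin[OF r s] t])
  have E2: "smin (\<lambda>e. r e * t e) (\<lambda>e. s e * t e) \<in> E_sm" by (rule E_smin[OF E_mult[OF r t] E_mult[OF s t]])
  have "NEG (\<lambda>e. EE e * \<bar>t e\<bar> + EE e)" using t unfolding E_sm_iff
    by (intro neg_add neg_mult_mod neg_EE MOD_abs) blast
  then have "NEG (\<lambda>e. smin r s e * t e - smin (\<lambda>e. r e * t e) (\<lambda>e. s e * t e) e)"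
  proof (rule neg_boundI, intro ballI)
    fix e assume "e \<in> I_set"
    then have t0: "0 \<le> t e" using tp by auto
    have mm: "min (r e * t e) (s e * t e) = min (r e) (s e) * t e"
      using t0 by (simp add: min_mult_distrib_right)
    have c1: "\<bar>smin r s e - min (r e) (s e)\<bar> \<le> EE e" by (rule smin_facts)
    have c2: "\<bar>smin (\<lambda>e. r e * t e) (\<lambda>e. s e * t e) e - min (r e * t e) (s e * t e)\<bar> \<le> EE e"
      by (rule smin_facts)
    have c1': "\<bar>(smin r s e - min (r e) (s e)) * t e\<bar> \<le> EE e * \<bar>t e\<bar>"
      unfolding abs_mult by (rule mult_right_mono[OF c1 abs_ge_zero])
    have eq: "smin r s e * t e - smin (\<lambda>e. r e * t e) (\<lambda>e. s e * t e) e
      = (smin r s e - min (r e) (s e)) * t e - (smin (\<lambda>e. r e * t e) (\<lambda>e. s e * t e) e - min (r e * t e) (s e * t e))"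
      unfolding mm by (simp add: algebra_simps)
    have "\<bar>smin r s e * t e - smin (\<lambda>e. r e * t e) (\<lambda>e. s e * t e) e\<bar>
       \<le> \<bar>(smin r s e - min (r e) (s e)) * t e\<bar> + \<bar>smin (\<lambda>e. r e * t e) (\<lambda>e. s e * t e) e - min (r e * t e) (s e * t e)\<bar>"
      unfolding eq by (rule abs_triangle_ineq4)
    also have "\<dots> \<le> EE e * \<bar>t e\<bar> + EE e" by (rule add_mono[OF c1' c2])
    also have "\<dots> = \<bar>EE e * \<bar>t e\<bar> + EE e\<bar>" using EE_pos[of e] by simp
    finally show "\<bar>smin r s e * t e - smin (\<lambda>e. r e * t e) (\<lambda>e. s e * t e) e\<bar> \<le> \<bar>EE e * \<bar>t e\<bar> + EE e\<bar>" .
  qed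
  moreover have "smooth_net (\<lambda>e. smin r s e * t e - smin (\<lambda>e. r e * t e) (\<lambda>e. s e * t e) e)"
    using E1 E2 by (simp add: E_sm_iff smooth_diff)
  ultimately show ?thesis using cls_eq[OF E1 E2] by (simp add: N_sm_iff)
qed



theorem proposition4p15:
  shows "f_ring Rsm_ring le_sm min_sm max_sm"
proof -
  have h1: "\<forall>x\<in>Rsm. le_sm x x"
  proof
    fix x assume "x \<in> Rsm"
    then obtain r where "r \<in> E_sm" "x = cls_sm r" by (rule RsmE)
    then show "le_sm x x" using le_refl_c by simp
  qed
  have h2: "\<forall>x\<in>Rsm. \<forall>y\<in>Rsm. le_sm x y \<and> le_sm y x \<longrightarrow> x = y"
  proof (intro ballI impI)
    fix x y assume "x \<in> Rsm" "y \<in> Rsm" and le: "le_sm x y \<and> le_sm y x"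
    then obtain r s where r: "r \<in> E_sm" "x = cls_sm r" and s: "s \<in> E_sm" "y = cls_sm s"
      by (auto elim!: RsmE)
    show "x = y" using le unfolding r(2) s(2) using le_antisym_c[OF r(1) s(1)] by simp
  qed
  have h3: "\<forall>x\<in>Rsm. \<forall>y\<in>Rsm. \<forall>z\<in>Rsm. le_sm x y \<and> le_sm y z \<longrightarrow> le_sm x z"
  proof (intro ballI impI)
    fix x y z assume "x \<in> Rsm" "y \<in> Rsm" "z \<in> Rsm" and le: "le_sm x y \<and> le_sm y z"
    then obtain r s t where r: "r \<in> E_sm" "x = cls_sm r" and s: "s \<in> E_sm" "y = cls_sm s"
      and t: "t \<in> E_sm" "z = cls_sm t"
      by (auto elim!: RsmE)
    show "le_sm x z" using le unfolding r(2) s(2) t(2) using le_trans_c[OF r(1) s(1) t(1)] by simp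
  qed
  have h4: "\<forall>x\<in>Rsm. \<forall>y\<in>Rsm. \<forall>z\<in>Rsm. le_sm x y \<longrightarrow> le_sm (add_sm x z) (add_sm y z)"
  proof (intro ballI impI)
    fix x y z assume "x \<in> Rsm" "y \<in> Rsm" "z \<in> Rsm" "le_sm x y"
    then show "le_sm (add_sm x z) (add_sm y z)"
      by (elim RsmE) (simp add: add_cls le_add_c)
  qed
  have h5: "\<forall>x\<in>Rsm. \<forall>y\<in>Rsm. le_sm (cls_sm (\<lambda>e. 0)) x \<and> le_sm (cls_sm (\<lambda>e. 0)) y
      \<longrightarrow> le_sm (cls_sm (\<lambda>e. 0)) (mult_sm x y)"
  proof (intro ballI impI)
    fix x y assume "x \<in> Rsm" "y \<in> Rsm" "le_sm (cls_sm (\<lambda>e. 0)) x \<and> le_sm (cls_sm (\<lambda>e. 0)) y"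
    then show "le_sm (cls_sm (\<lambda>e. 0)) (mult_sm x y)"
      by (elim RsmE) (simp add: mult_cls le_mult_c)
  qed
  have h6: "\<forall>x\<in>Rsm. \<forall>y\<in>Rsm. min_sm x y \<in> Rsm \<and> le_sm (min_sm x y) x \<and> le_sm (min_sm x y) y \<and>
        (\<forall>z\<in>Rsm. le_sm z x \<and> le_sm z y \<longrightarrow> le_sm z (min_sm x y))"
  proof (intro ballI)
    fix x y assume "x \<in> Rsm" "y \<in> Rsm"
    then obtain r s where r: "r \<in> E_sm" "x = cls_sm r" and s: "s \<in> E_sm" "y = cls_sm s"
      by (auto elim!: RsmE)
    have m: "min_sm x y = cls_sm (smin r s)" using min_sm_cls[OF r(1) s(1)] r s by simp
    have "\<forall>z\<in>Rsm. le_sm z x \<and> le_sm z y \<longrightarrow> le_sm z (min_sm x y)"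
    proof (intro ballI impI)
      fix z assume "z \<in> Rsm" and le: "le_sm z x \<and> le_sm z y"
      then obtain u where u: "u \<in> E_sm" "z = cls_sm u" by (auto elim!: RsmE)
      show "le_sm z (min_sm x y)" using le unfolding r(2) s(2) u(2) min_sm_cls[OF r(1) s(1)]
        using smin_glb_c[OF r(1) s(1) u(1)] by simp
    qed
    then show "min_sm x y \<in> Rsm \<and> le_sm (min_sm x y) x \<and> le_sm (min_sm x y) y \<and>
        (\<forall>z\<in>Rsm. le_sm z x \<and> le_sm z y \<longrightarrow> le_sm z (min_sm x y))"
      unfolding m using cls_in[OF E_smin[OF r(1) s(1)]] smin_le_c[OF r(1) s(1)] r(2) s(2) by simp
  qed
  have h7: "\<forall>x\<in>Rsm. \<forall>y\<in>Rsm. max_sm x y \<in> Rsm \<and> le_sm x (max_sm x y) \<and> le_sm y (max_sm x y) \<and>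
        (\<forall>z\<in>Rsm. le_sm x z \<and> le_sm y z \<longrightarrow> le_sm (max_sm x y) z)"
  proof (intro ballI)
    fix x y assume "x \<in> Rsm" "y \<in> Rsm"
    then obtain r s where r: "r \<in> E_sm" "x = cls_sm r" and s: "s \<in> E_sm" "y = cls_sm s"
      by (auto elim!: RsmE)
    have m: "max_sm x y = cls_sm (smax r s)" using max_sm_cls[OF r(1) s(1)] r s by simp
    have "\<forall>z\<in>Rsm. le_sm x z \<and> le_sm y z \<longrightarrow> le_sm (max_sm x y) z"
    proof (intro ballI impI)
      fix z assume "z \<in> Rsm" and le: "le_sm x z \<and> le_sm y z"
      then obtain u where u: "u \<in> E_sm" "z = cls_sm u" by (auto elim!: RsmE)
      show "le_sm (max_sm x y) z" using le unfolding r(2) s(2) u(2) max_sm_cls[OF r(1) s(1)]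
        using smax_lub_c[OF r(1) s(1) u(1)] by simp
    qed
    then show "max_sm x y \<in> Rsm \<and> le_sm x (max_sm x y) \<and> le_sm y (max_sm x y) \<and>
        (\<forall>z\<in>Rsm. le_sm x z \<and> le_sm y z \<longrightarrow> le_sm (max_sm x y) z)"
      unfolding m using cls_in[OF E_smax[OF r(1) s(1)]] smax_ge_c[OF r(1) s(1)] r(2) s(2) by simp
  qed
  have h8: "\<forall>x\<in>Rsm. \<forall>y\<in>Rsm. \<forall>w\<in>Rsm. le_sm (cls_sm (\<lambda>e. 0)) w \<longrightarrow>
       mult_sm (min_sm x y) w = min_sm (mult_sm x w) (mult_sm y w)"
  proof (intro ballI impI)
    fix x y w assume "x \<in> Rsm" "y \<in> Rsm" "w \<in> Rsm" and w0: "le_sm (cls_sm (\<lambda>e. 0)) w"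
    then obtain r s t where r: "r \<in> E_sm" "x = cls_sm r" and s: "s \<in> E_sm" "y = cls_sm s"
      and t: "t \<in> E_sm" "w = cls_sm t"
      by (auto elim!: RsmE)
    obtain n where n: "n \<in> N_sm" "\<forall>e\<in>I_set. 0 \<le> t e + n e"
      using w0 t le_cls[OF E_const t(1)] by auto
    define t' where "t' = (\<lambda>e. t e + n e)"
    have t'E: "t' \<in> E_sm" unfolding t'_def by (rule E_add[OF t(1) N_E[OF n(1)]])
    have "(\<lambda>e. t' e - t e) \<in> N_sm" unfolding t'_def by (rule N_cong[OF n(1)]) simp
    then have wt: "w = cls_sm t'" using cls_eq[OF t'E t(1)] t(2) by simp
    have tp: "\<forall>e\<in>I_set. 0 \<le> t' e" using n(2) unfolding t'_def by simp
    have "mult_sm (min_sm x y) w = cls_sm (\<lambda>e. smin r s e * t' e)"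
      unfolding r(2) s(2) wt min_sm_cls[OF r(1) s(1)] by (rule mult_cls[OF E_smin[OF r(1) s(1)] t'E])
    also have "\<dots> = cls_sm (smin (\<lambda>e. r e * t' e) (\<lambda>e. s e * t' e))"
      by (rule fring_c[OF r(1) s(1) t'E tp])
    also have "\<dots> = min_sm (mult_sm x w) (mult_sm y w)"
      unfolding r(2) s(2) wt mult_cls[OF r(1) t'E] mult_cls[OF s(1) t'E]
      by (rule min_sm_cls[symmetric, OF E_mult[OF r(1) t'E] E_mult[OF s(1) t'E]])
    finally show "mult_sm (min_sm x y) w = min_sm (mult_sm x w) (mult_sm y w)" .
  qed
  show ?thesis
    unfolding f_ring_def l_ring_def carrier_R add_R mult_R zero_R
    using ring_R h1 h2 h3 h4 h5 h6 h7 h8 by blast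
qed


end
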